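(* Let $Q$ be a nonzero quadratic form on $\mathbb{F}_{q_1}/\mathbb{F}_q$ with rank $r_Q$, and let \[\mathcal{C}_Q=\{(aQ(x)+\mathrm{Tr}_{q_2/q}(by))_{(x,y)\in\mathbb{F}^\star} : (a,b)\in\mathbb{F}_q\times\mathbb{F}_{q_2}\}.\] For each $r$ with $1\le r\le m_2+1$: (1) if $r_Q$ is even and $\epsilon=1$, then $d_r(\mathcal{C}_Q)=q^{M-r}\bigl(q^r-1-(q-1)q^{-r_Q/2}\bigr)$; (2) if $r_Q$ is even and $\epsilon=-1$, then $d_r(\mathcal{C}_Q)=q^{M-r}(q^r-1)$ for $1\le r<m_2+1$, and $d_r(\mathcal{C}_Q)=q^{M-r}\bigl(q^r-1+(q-1)q^{-r_Q/2}\bigr)$ for $r=m_2+1$; (3) if $r_Q$ is odd, then $d_r(\mathcal{C}_Q)=q^{M-r}(q^r-1)$.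
   Context: Let $p$ be an odd prime, $m\ge1$, $q=p^m$. Let $m_1,m_2$ be positive integers, $M=m_1+m_2$, $q_i=q^{m_i}$, $\mathbb{F}=\mathbb{F}_{q_1}\times\mathbb{F}_{q_2}$, $\mathbb{F}^\star=\mathbb{F}\setminus\{(0,0)\}$. $\mathrm{Tr}_{q^s/q}$ is the trace $\mathbb{F}_{q^s}\to\mathbb{F}_q$; $\eta$ is the quadratic character of $\mathbb{F}_q$ with $\eta(0)=0$. A quadratic form $Q$ on $\mathbb{F}_{q_1}/\mathbb{F}_q$ is a map $Q:\mathbb{F}_{q_1}\to\mathbb{F}_q$ with $Q(ax)=a^2Q(x)$ ($a\in\mathbb{F}_q$) such that $B_Q(x,y)=\frac12(Q(x+y)-Q(x)-Q(y))$ is $\mathbb{F}_q$-bilinear; its rank is $r_Q=m_1-\dim_{\mathbb{F}_q}\{x:B_Q(x,y)=0\ \forall y\}$. In suitable coordinates $Q=\sum_{i=1}^{r_Q}\lambda_ix_i^2$ with $\lambda_i\in\mathbb{F}_q^*$; $\varepsilon_Q=\eta(\lambda_1\cdots\lambda_{r_Q})$. Set $\epsilon=\varepsilon_Q(-1)^{(p-1)mr_Q/4}$ if $r_Q$ is even, $\epsilon=\varepsilon_Q(-1)^{(p-1)m(r_Q+1)/4}$ if $r_Q$ is odd. For a linear code $\mathcal{C}\subseteq\mathbb{F}_q^n$ of dimension $k$ and $1\le r\le k$, the $r$-th generalized Hamming weight is $d_r(\mathcal{C})=\min\{\#\mathrm{Supp}(K)\}$ over $r$-dimensional subspaces $K$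 of $\mathcal{C}$, where $\mathrm{Supp}(K)$ is the set of coordinates $i$ such that $c_i\neq0$ for some $c\in K$. *)

theory Defs
  imports Complex_Main "HOL-Computational_Algebra.Primes" "HOL-Library.Function_Algebras" "HOL-Library.FuncSet" "HOL-Library.Cardinality"
begin

text \<open>The base field F_q is a finite field type 'a (with CARD('a) = q).
  An extension field F_(q^s) is a finite field type 'b together with an injective ring
  homomorphism emb : 'a \<Rightarrow> 'b; it is an F_q-vector space via c \<cdot> x = emb c * x.\<close>

definition field_emb :: "('a::field \<Rightarrow> 'b::field) \<Rightarrow> bool" where
  "field_emb emb \<longleftrightarrow> inj emb \<and> emb 1 = 1 \<and>
     (\<forall>x y. emb (x + y) = emb x + emb y) \<and> (\<forall>x y. emb (x * y) = emb x * emb y)"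

definition escale :: "('a::field \<Rightarrow> 'b::field) \<Rightarrow> 'a \<Rightarrow> 'b \<Rightarrow> 'b" where
  "escale emb c x = emb c * x"

definition trace :: "('a::{field,finite} \<Rightarrow> 'b::field) \<Rightarrow> nat \<Rightarrow> 'b \<Rightarrow> 'a" where
  "trace emb s y = the_inv emb (\<Sum>i<s. y ^ (CARD('a) ^ i))"

definition eta :: "'a::field \<Rightarrow> int" where
  "eta x = (if x = 0 then 0 else if (\<exists>y. y ^ 2 = x) then 1 else -1)"

definition qf_bil :: "('b \<Rightarrow> 'a::field) \<Rightarrow> 'b::field \<Rightarrow> 'b \<Rightarrow> 'a" where
  "qf_bil Q x y = (Q (x + y) - Q x - Q y) / 2"

definition is_quadratic_form :: "('a::field \<Rightarrow> 'b::field) \<Rightarrow> ('b \<Rightarrow> 'a) \<Rightarrow> bool" where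
  "is_quadratic_form emb Q \<longleftrightarrow>
     (\<forall>a x. Q (emb a * x) = a ^ 2 * Q x) \<and>
     (\<forall>x x' y. qf_bil Q (x + x') y = qf_bil Q x y + qf_bil Q x' y) \<and>
     (\<forall>x y y'. qf_bil Q x (y + y') = qf_bil Q x y + qf_bil Q x y') \<and>
     (\<forall>a x y. qf_bil Q (emb a * x) y = a * qf_bil Q x y) \<and>
     (\<forall>a x y. qf_bil Q x (emb a * y) = a * qf_bil Q x y)"

definition qf_rank :: "('a::field \<Rightarrow> 'b::field) \<Rightarrow> nat \<Rightarrow> ('b \<Rightarrow> 'a) \<Rightarrow> nat" where
  "qf_rank emb m1 Q = m1 - vector_space.dim (escale emb) {x. \<forall>y. qf_bil Q x y = 0}"

definition qf_diag :: "('a::field \<Rightarrow> 'b::field) \<Rightarrow> nat \<Rightarrow> ('b \<Rightarrow> 'a)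
    \<Rightarrow> (nat \<Rightarrow> 'b) \<Rightarrow> (nat \<Rightarrow> 'a) \<Rightarrow> nat \<Rightarrow> bool" where
  "qf_diag emb m1 Q e lam r \<longleftrightarrow>
     (\<forall>x. \<exists>!c. c \<in> {..<m1} \<rightarrow>\<^sub>E UNIV \<and> x = (\<Sum>i<m1. emb (c i) * e i)) \<and>
     (\<forall>c. Q (\<Sum>i<m1. emb (c i) * e i) = (\<Sum>i<r. lam i * (c i) ^ 2)) \<and>
     (\<forall>i<r. lam i \<noteq> 0)"

definition qf_eps :: "('a::field \<Rightarrow> 'b::field) \<Rightarrow> nat \<Rightarrow> ('b \<Rightarrow> 'a) \<Rightarrow> int" where
  "qf_eps emb m1 Q =
     (let r = qf_rank emb m1 Q;
          lam = (SOME lam. \<exists>e. qf_diag emb m1 Q e lam r)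
      in eta (\<Prod>i<r. lam i))"

text \<open>The sign epsilon from the paper (p, m with q = p^m).\<close>
definition sign_eps :: "nat \<Rightarrow> nat \<Rightarrow> ('a::field \<Rightarrow> 'b::field) \<Rightarrow> nat \<Rightarrow> ('b \<Rightarrow> 'a) \<Rightarrow> int" where
  "sign_eps p m emb m1 Q =
     (let r = qf_rank emb m1 Q
      in qf_eps emb m1 Q *
         (-1) ^ (if even r then (p - 1) * m * r div 4 else (p - 1) * m * (r + 1) div 4))"

text \<open>Coordinates indexed by F* = F_(q1) x F_(q2) minus (0,0); codewords are functions
  on F_(q1) x F_(q2), set to 0 outside F*.\<close>
definition Fstar :: "('b::zero \<times> 'c::zero) set" where
  "Fstar = UNIV - {(0, 0)}"

definition code_Q :: "('a::{field,finite} \<Rightarrow> 'c::field) \<Rightarrow> nat \<Rightarrow> ('b::zero \<Rightarrow> 'a)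
    \<Rightarrow> ('b \<times> 'c \<Rightarrow> 'a) set" where
  "code_Q emb2 m2 Q =
     {(\<lambda>(x, y). if (x, y) \<in> Fstar then a * Q x + trace emb2 m2 (b * y) else 0) | a b. True}"

definition fscale :: "'a::field \<Rightarrow> ('i \<Rightarrow> 'a) \<Rightarrow> ('i \<Rightarrow> 'a)" where
  "fscale c f = (\<lambda>i. c * f i)"

definition supp_sub :: "'i set \<Rightarrow> ('i \<Rightarrow> 'a::zero) set \<Rightarrow> 'i set" where
  "supp_sub I K = {i \<in> I. \<exists>c \<in> K. c i \<noteq> 0}"

definition ghw :: "'i set \<Rightarrow> ('i \<Rightarrow> 'a::field) set \<Rightarrow> nat \<Rightarrow> nat" where
  "ghw I C r = Min {card (supp_sub I K) | K. K \<subseteq> C \<and> module.subspace fscale K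
                                          \<and> vector_space.dim fscale K = r}"

end

theory Submission
  imports Defs "HOL-Computational_Algebra.Polynomial"
begin


lemma ff_pow_card:
  fixes x :: "'a :: {field,finite}"
  shows "x ^ CARD('a) = x"
proof (cases "x = 0")
  case False
  have "x * (\<Prod>y\<in>UNIV-{0}. x * y) = x * x ^ (CARD('a) - 1) * \<Prod>(UNIV-{0})"
    by (simp add: prod.distrib mult_ac)
  also have "x * x ^ (CARD('a) - 1) = x ^ Suc (CARD('a) - 1)"
    by (subst power_Suc) auto
  also have "Suc (CARD('a) - 1) = CARD('a)"
    using finite_UNIV_card_ge_0[where ?'a = 'a] by simp
  also have "(\<Prod>y\<in>UNIV-{0}. x * y) = (\<Prod>y\<in>UNIV-{0}. y)"
    by (rule prod.reindex_bij_witness[of _ "\<lambda>y. y / x" "\<lambda>y. x * y"]) (use False in auto)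
  finally show ?thesis
    by simp
qed (use finite_UNIV_card_ge_0[where ?'a = 'a] in auto)

lemma ff_pow_card_pow:
  fixes x :: "'a :: {field,finite}"
  shows "x ^ (CARD('a) ^ n) = x"
  by (induction n) (simp_all add: ff_pow_card power_mult)

lemma ff_prime_CHAR: "prime CHAR('a::{field,finite})"
  by (rule prime_CHAR_semidom) (simp add: finite_imp_CHAR_pos)

lemma ff_of_nat_card: "of_nat CARD('a::{field,finite}) = (0::'a)"
proof -
  have "(\<Sum>y\<in>UNIV. y + (1::'a)) = (\<Sum>y\<in>UNIV. y)"
    by (rule sum.reindex_bij_witness[of _ "\<lambda>y. y - 1" "\<lambda>y. y + 1"]) auto
  hence "(\<Sum>y\<in>(UNIV::'a set). 1) = (0::'a)" by (simp add: sum.distrib)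
  thus ?thesis by simp
qed

lemma CHAR_dvd_CARD': "CHAR('a::{field,finite}) dvd CARD('a)"
  using ff_of_nat_card[where 'a='a] by (simp add: of_nat_eq_0_iff_char_dvd)

lemma ff_CHAR_eq:
  assumes "prime p" "CARD('a::{field,finite}) = p ^ m"
  shows "CHAR('a) = p"
proof -
  have "CHAR('a) dvd p ^ m" using CHAR_dvd_CARD'[where 'a='a] assms by simp
  hence "CHAR('a) dvd p" using ff_prime_CHAR[where 'a='a] prime_dvd_power by blast
  moreover have "CHAR('a) \<noteq> 1" using ff_prime_CHAR[where 'a='a] by auto
  ultimately show ?thesis using assms(1) prime_nat_iff by blast
qed

section \<open>Quadratic character\<close>

context
  fixes dummy :: "'a :: {field,finite}"
  assumes oddq: "odd CARD('a)"
begin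

lemma two_nz: "(2::'a) \<noteq> 0"
proof
  assume "(2::'a) = 0"
  hence "of_nat 2 = (0::'a)" by simp
  hence "CHAR('a) dvd 2" by (metis of_nat_eq_0_iff_char_dvd)
  moreover have "CHAR('a) \<noteq> 1" using ff_prime_CHAR[where 'a='a] by auto
  ultimately have "CHAR('a) = 2" using prime_nat_iff[of 2] by auto
  hence "2 dvd CARD('a)" using CHAR_dvd_CARD'[where 'a='a] by simp
  thus False using oddq by simp
qed

lemma one_neq_minus_one: "(1::'a) \<noteq> -1"
  using two_nz by (metis add_eq_0_iff one_add_one)

lemma card_ge3: "CARD('a) \<ge> 3"
proof -
  have "CARD('a) \<ge> 2"
  proof -
    have "card {1, -1::'a} = 2" using one_neq_minus_one by simp
    moreover have "card {1, -1::'a} \<le> CARD('a)" by (rule card_mono) auto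
    ultimately show ?thesis by simp
  qed
  thus ?thesis using oddq by presburger
qed

lemma sq_eq_iff: "(u::'a)^2 = y^2 \<longleftrightarrow> u = y \<or> u = -y"
proof -
  have "u^2 - y^2 = (u - y) * (u + y)" by (simp add: power2_eq_square algebra_simps)
  hence "u^2 = y^2 \<longleftrightarrow> (u - y) * (u + y) = 0" by (simp add: eq_iff_diff_eq_0[of "u^2"])
  also have "\<dots> \<longleftrightarrow> u = y \<or> u + y = 0" by simp
  also have "\<dots> \<longleftrightarrow> u = y \<or> u = -y" by (simp add: eq_neg_iff_add_eq_0)
  finally show ?thesis .
qed

lemma card_sqrt_nz:
  assumes "(a::'a) \<noteq> 0"
  shows "card {u. u^2 = a} = (if \<exists>y. y^2 = a then 2 else 0)"
proof (cases "\<exists>y. y^2 = a")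
  case True
  then obtain y where y: "y^2 = a" by blast
  have e: "{u. u^2 = a} = {y, -y}" using sq_eq_iff[of _ y] y by auto
  have "y \<noteq> 0" using y assms by auto
  hence "2 * y \<noteq> 0" using two_nz by simp
  hence "y \<noteq> -y" by (metis add_eq_0_iff mult_2)
  thus ?thesis using True e by simp
qed simp

definition nzsq :: "'a set" where "nzsq = {x. x \<noteq> 0 \<and> (\<exists>y. y^2 = x)}"

lemma card_nzsq: "2 * card nzsq = CARD('a) - 1"
proof -
  have "UNIV - {0::'a} = (\<Union>s\<in>nzsq. {u. u^2 = s})"
    unfolding nzsq_def by auto
  hence "card (UNIV - {0::'a}) = card (\<Union>s\<in>nzsq. {u. u^2 = s})" by simp
  also have "\<dots> = (\<Sum>s\<in>nzsq. card {u. u^2 = s})"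
    by (rule card_UN_disjoint) auto
  also have "\<dots> = (\<Sum>s\<in>nzsq. 2)"
    by (rule sum.cong) (auto simp: nzsq_def card_sqrt_nz)
  finally show ?thesis by (simp add: card_Diff_singleton)
qed

definition kq :: nat where "kq = (CARD('a) - 1) div 2"

lemma two_kq: "2 * kq = CARD('a) - 1" using oddq unfolding kq_def by presburger

lemma kq_pos: "kq \<ge> 1" using card_ge3 two_kq by linarith

lemma pow_card_minus1: "(x::'a) \<noteq> 0 \<Longrightarrow> x ^ (CARD('a) - 1) = 1"
proof -
  assume "x \<noteq> 0"
  have "CARD('a) = Suc (CARD('a) - 1)" using card_ge3 by simp
  hence "x * x ^ (CARD('a) - 1) = x ^ CARD('a)"
    by (metis power_Suc)
  thus ?thesis using ff_pow_card[of x] \<open>x \<noteq> 0\<close> by simp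
qed

lemma euler_crit:
  assumes "(x::'a) \<noteq> 0"
  shows "x ^ kq = (if \<exists>y. y^2 = x then 1 else -1)"
proof -
  define P :: "'a poly" where "P = Polynomial.monom 1 kq - 1"
  have cP: "coeff P kq = 1" using kq_pos unfolding P_def by (simp add: coeff_monom)
  hence "P \<noteq> 0" by auto
  have "degree P \<le> kq" unfolding P_def
    by (metis degree_diff_le degree_monom_le degree_1 le0)
  hence R: "card {x. poly P x = 0} \<le> kq" using card_poly_roots_bound[OF \<open>P \<noteq> 0\<close>] by linarith
  have pP: "poly P x = x ^ kq - 1" for x unfolding P_def by (simp add: poly_monom)
  have sub: "nzsq \<subseteq> {x. poly P x = 0}"
  proof
    fix z assume "z \<in> nzsq"
    then obtain y where "y^2 = z" "z \<noteq> 0" unfolding nzsq_def by auto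
    hence "y \<noteq> 0" by auto
    have "z ^ kq = y ^ (2 * kq)" using \<open>y^2 = z\<close> by (simp add: power_mult)
    also have "\<dots> = 1" using pow_card_minus1[OF \<open>y \<noteq> 0\<close>] two_kq by simp
    finally show "z \<in> {x. poly P x = 0}" using pP by simp
  qed
  have ck: "card nzsq = kq" using card_nzsq two_kq by linarith
  show ?thesis
  proof (cases "\<exists>y. y^2 = x")
    case True
    hence "x \<in> nzsq" using assms unfolding nzsq_def by auto
    thus ?thesis using sub pP True by auto
  next
    case False
    hence xn: "x \<notin> nzsq" unfolding nzsq_def by auto
    have "x ^ kq \<noteq> 1"
    proof
      assume "x ^ kq = 1"
      hence "insert x nzsq \<subseteq> {x. poly P x = 0}" using sub pP by auto
      hence "card (insert x nzsq) \<le> card {x. poly P x = 0}"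
        by (rule card_mono[OF poly_roots_finite[OF \<open>P \<noteq> 0\<close>]])
      hence "card (insert x nzsq) \<le> kq" using R by linarith
      thus False using xn ck by simp
    qed
    moreover have "(x ^ kq)^2 = 1"
      using pow_card_minus1[OF assms] two_kq by (simp add: power_mult[symmetric] mult.commute)
    ultimately have "x ^ kq = -1"
      by (metis sq_eq_iff power_one)
    thus ?thesis using False by simp
  qed
qed

lemma eta_pow: "of_int (eta x) = (x::'a) ^ kq"
  using euler_crit[of x] kq_pos unfolding eta_def by (auto simp: power_0_left)

lemma eta_range: "eta x \<in> {-1,0,1}" unfolding eta_def by auto

lemma of_int_inj3:
  assumes "a \<in> {-1,0,1}" "b \<in> {-1,0,1}" "(of_int a :: 'a) = of_int b"
  shows "a = b"
proof -
  have "(0::'a) \<noteq> 1" "(0::'a) \<noteq> -1" "(1::'a) \<noteq> -1" using one_neq_minus_one by auto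
  thus ?thesis using assms by auto
qed

lemma eta_mult: "eta ((x::'a) * y) = eta x * eta y"
proof -
  have "(of_int (eta (x*y)) :: 'a) = of_int (eta x * eta y)"
    by (simp add: eta_pow power_mult_distrib)
  moreover have "eta x * eta y \<in> {-1,0,1}" using eta_range[of x] eta_range[of y] by auto
  ultimately show ?thesis using of_int_inj3 eta_range by blast
qed

lemma eta_minus1: "eta (-1::'a) = (-1) ^ kq"
proof -
  have "(of_int (eta (-1::'a)) :: 'a) = of_int ((-1) ^ kq)"
    by (simp add: eta_pow)
  moreover have "((-1::int) ^ kq) \<in> {-1,0,1}" by (cases "even kq") auto
  ultimately show ?thesis using of_int_inj3 eta_range by blast
qed

lemma eta_zero[simp]: "eta (0::'a) = 0" unfolding eta_def by simp

lemma eta_nz: "(x::'a) \<noteq> 0 \<Longrightarrow> eta x = 1 \<or> eta x = -1" unfolding eta_def by auto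

lemma eta_sq_nz: "(x::'a) \<noteq> 0 \<Longrightarrow> eta x * eta x = 1" using eta_nz by fastforce

lemma eta_square: "(x::'a) \<noteq> 0 \<Longrightarrow> eta (x^2) = 1" unfolding eta_def by auto

lemma card_sqrt: "int (card {u. u^2 = (a::'a)}) = 1 + eta a"
proof (cases "a = 0")
  case True
  hence "{u. u^2 = a} = {0}" by auto
  thus ?thesis using True by simp
next
  case False
  thus ?thesis using card_sqrt_nz[OF False] unfolding eta_def by auto
qed

lemma sum_eta_sq_plus:
  assumes "(a::'a) \<noteq> 0"
  shows "(\<Sum>t\<in>UNIV. eta (t^2 + a)) = -1"
proof -
  define X where "X = {(u,t). u^2 = t^2 + (a::'a)}"
  have "X = (\<lambda>(t,u). (u,t)) ` (SIGMA t:UNIV. {u. u^2 = t^2 + a})"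
    unfolding X_def by auto
  hence "card X = card (SIGMA t:UNIV. {u. u^2 = t^2 + a})"
    by (metis (no_types, lifting) card_image inj_on_def prod.inject case_prod_beta prod.collapse)
  also have "\<dots> = (\<Sum>t\<in>UNIV. card {u. u^2 = t^2 + a})" by simp
  finally have "int (card X) = (\<Sum>t\<in>UNIV. 1 + eta (t^2 + a))"
    by (simp add: card_sqrt)
  also have "\<dots> = int CARD('a) + (\<Sum>t\<in>UNIV. eta (t^2 + a))"
    by (simp add: sum.distrib)
  finally have e1: "int (card X) = int CARD('a) + (\<Sum>t\<in>UNIV. eta (t^2 + a))" .
  have "X = (\<lambda>(v,w). ((v + w) / 2, (w - v) / 2)) ` {(v,w). v * w = a}"
  proof -
    have "(u,t) \<in> (\<lambda>(v,w). ((v + w) / 2, (w - v) / 2)) ` {(v,w). v * w = a}"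
      if "u^2 = t^2 + a" for u t
      apply (rule image_eqI[of _ _ "(u - t, u + t)"])
      using that two_nz by (auto simp: field_simps power2_eq_square)
    moreover have "((v + w) / 2)^2 = ((w - v) / 2)^2 + a" if "v * w = a" for v w
    proof -
      have f: "(4::'a) \<noteq> 0" using two_nz by (metis mult_eq_0_iff num_double numeral_times_numeral)
      have "(v+w)^2 = (w-v)^2 + 4*(v*w)" by (simp add: power2_eq_square algebra_simps)
      hence "(v+w)^2 / 4 = (w-v)^2 / 4 + v * w" using f by (simp add: add_divide_distrib)
      thus ?thesis using that by (simp add: power_divide)
    qed
    ultimately show ?thesis unfolding X_def by auto
  qed
  moreover have "inj_on (\<lambda>(v,w). ((v + w) / 2, (w - v) / 2)) {(v,w). v * w = (a::'a)}"
  proof (rule inj_onI, clarify)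
    fix v w v' w' :: 'a
    assume "(v + w) / 2 = (v' + w') / 2" "(w - v) / 2 = (w' - v') / 2"
    hence e: "v + w = v' + w'" "w - v = w' - v'" using two_nz by (auto simp only: divide_cancel_right)
    hence "(v + w) + (w - v) = (v' + w') + (w' - v')" by simp
    hence "w + w = w' + w'" by (simp add: algebra_simps)
    hence "2 * w = 2 * w'" by (simp only: mult_2)
    hence "w = w'" using two_nz by simp
    thus "v = v' \<and> w = w'" using e by simp
  qed
  ultimately have "card X = card {(v,w). v * w = (a::'a)}" by (simp add: card_image)
  also have "{(v,w). v * w = (a::'a)} = (\<lambda>v. (v, a / v)) ` (UNIV - {0})"
    using assms by (auto simp: field_simps)
  also have "card \<dots> = CARD('a) - 1"
    by (subst card_image) (auto simp: inj_on_def card_Diff_singleton)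
  finally have "int (card X) = int CARD('a) - 1" using card_ge3 by simp
  with e1 show ?thesis by simp
qed

lemma sum_eta_gen:
  assumes "(b::'a) \<noteq> 0"
  shows "(\<Sum>t\<in>UNIV. eta (a + b * t^2)) = (if a = 0 then (int CARD('a) - 1) * eta b else - eta b)"
proof (cases "a = 0")
  case True
  have "(\<Sum>t\<in>UNIV. eta (a + b * t^2)) = (\<Sum>t\<in>UNIV. if t = (0::'a) then 0 else eta b)"
    by (rule sum.cong) (auto simp: True eta_mult eta_square)
  also have "\<dots> = (\<Sum>t\<in>UNIV - {0::'a}. eta b)"
    by (simp add: sum.If_cases Diff_eq Int_commute)
  also have "\<dots> = (int CARD('a) - 1) * eta b" by (simp add: card_Diff_singleton of_nat_diff)
  finally show ?thesis using True by simp
next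
  case False
  have "(\<Sum>t\<in>UNIV. eta (a + b * t^2)) = (\<Sum>t\<in>UNIV. eta b * eta (t^2 + a / b))"
  proof (rule sum.cong)
    fix t :: 'a
    have "b * (t^2 + a / b) = a + b * t^2" using assms by (simp add: field_simps)
    thus "eta (a + b * t^2) = eta b * eta (t^2 + a / b)" by (metis eta_mult)
  qed simp
  also have "\<dots> = - eta b" using sum_eta_sq_plus[of "a / b"] False assms
    by (simp add: sum_distrib_left[symmetric])
  finally show ?thesis using False by simp
qed

end


section \<open>Counting zeros of diagonal forms\<close>

lemma card_PiE_Suc:
  "card {x \<in> {..<Suc n} \<rightarrow>\<^sub>E (UNIV::'a::finite set). P x} =
     (\<Sum>s\<in>UNIV. card {x \<in> {..<n} \<rightarrow>\<^sub>E (UNIV::'a set). P (x(n:=s))})"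
proof -
  define S where "S = (SIGMA s:(UNIV::'a set). {x \<in> {..<n} \<rightarrow>\<^sub>E (UNIV::'a set). P (x(n:=s))})"
  have eq: "{x \<in> {..<Suc n} \<rightarrow>\<^sub>E (UNIV::'a set). P x} = (\<lambda>(s,g). g(n:=s)) ` S"
  proof (rule set_eqI, rule iffI)
    fix x assume x: "x \<in> {x \<in> {..<Suc n} \<rightarrow>\<^sub>E (UNIV::'a set). P x}"
    have "(x n, x(n:=undefined)) \<in> S" using x unfolding S_def
      by (auto simp: PiE_def extensional_def)
    moreover have "x = (\<lambda>(s,g). g(n:=s)) (x n, x(n:=undefined))" by simp
    ultimately show "x \<in> (\<lambda>(s,g). g(n:=s)) ` S" by blast
  next
    fix x assume "x \<in> (\<lambda>(s,g). g(n:=s)) ` S"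
    then obtain s g where "x = g(n:=s)" "g \<in> {..<n} \<rightarrow>\<^sub>E UNIV" "P (g(n:=s))"
      unfolding S_def by auto
    thus "x \<in> {x \<in> {..<Suc n} \<rightarrow>\<^sub>E (UNIV::'a set). P x}"
      by (auto simp: PiE_def extensional_def)
  qed
  have inj: "inj_on (\<lambda>(s,g). g(n:=s)) S"
  proof (rule inj_onI, clarify)
    fix s g s' g'
    assume a: "(s, g) \<in> S" "(s', g') \<in> S" "g(n := s) = g'(n := s')"
    hence "s = s'" by (metis fun_upd_same)
    moreover have "g n = undefined" "g' n = undefined" using a unfolding S_def
      by (auto simp: PiE_def extensional_def)
    ultimately show "s = s' \<and> g = g'" using a(3) by (metis fun_upd_triv fun_upd_upd)
  qed
  have "card {x \<in> {..<Suc n} \<rightarrow>\<^sub>E (UNIV::'a set). P x} = card S"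
    using eq inj by (simp add: card_image)
  also have "\<dots> = (\<Sum>s\<in>UNIV. card {x \<in> {..<n} \<rightarrow>\<^sub>E (UNIV::'a set). P (x(n:=s))})"
    unfolding S_def by (rule card_SigmaI) (auto intro!: finite_subset[where B="{..<n} \<rightarrow>\<^sub>E UNIV"] finite_PiE)
  finally show ?thesis .
qed

definition Nd :: "(nat \<Rightarrow> 'a::{field,finite}) \<Rightarrow> nat \<Rightarrow> 'a \<Rightarrow> nat" where
  "Nd lam r c = card {x \<in> {..<r} \<rightarrow>\<^sub>E (UNIV::'a set). (\<Sum>i<r. lam i * x i ^ 2) = c}"

lemma Nd_0: "Nd lam 0 c = (if c = 0 then 1 else 0)"
  unfolding Nd_def by simp

lemma Nd_Suc: "Nd lam (Suc r) c = (\<Sum>s\<in>UNIV. Nd lam r (c - lam r * s^2))"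
  unfolding Nd_def
proof (subst card_PiE_Suc, rule sum.cong[OF refl])
  fix s
  have "(\<Sum>i<Suc r. lam i * (x(r:=s)) i ^ 2) = (\<Sum>i<r. lam i * x i ^ 2) + lam r * s^2" for x
  proof -
    have "(\<Sum>i<r. lam i * (x(r:=s)) i ^ 2) = (\<Sum>i<r. lam i * x i ^ 2)"
      by (rule sum.cong) auto
    thus ?thesis by simp
  qed
  hence "\<And>x. ((\<Sum>i<Suc r. lam i * (x(r:=s)) i ^ 2) = c) = ((\<Sum>i<r. lam i * x i ^ 2) = c - lam r * s^2)"
    by (simp add: eq_diff_eq)
  thus "card {x \<in> {..<r} \<rightarrow>\<^sub>E UNIV. (\<Sum>i<Suc r. lam i * (x(r:=s)) i ^ 2) = c} =
        card {x \<in> {..<r} \<rightarrow>\<^sub>E UNIV. (\<Sum>i<r. lam i * x i ^ 2) = c - lam r * s^2}"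
    by simp
qed

lemma sum_if_count:
  "(\<Sum>s\<in>(UNIV::'a::finite set). if P s then (q::real) - 1 else -1) = q * card {s. P s} - CARD('a)"
proof -
  have "(\<Sum>s\<in>(UNIV::'a set). if P s then q - 1 else -1) = (\<Sum>s\<in>(UNIV::'a set). (if P s then q else 0) - 1)"
    by (rule sum.cong) auto
  also have "\<dots> = (\<Sum>s\<in>(UNIV::'a set). if P s then q else 0) - CARD('a)"
    by (simp add: sum_subtractf)
  also have "(\<Sum>s\<in>(UNIV::'a set). if P s then q else 0) = q * card {s. P s}"
    by (simp add: sum.If_cases)
  finally show ?thesis .
qed

context
  fixes dummy :: "'a :: {field,finite}"
  assumes oddq: "odd CARD('a)"
begin

lemma eta_div: "(l::'a) \<noteq> 0 \<Longrightarrow> eta (c / l) = eta (l * c)"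
proof -
  assume l: "l \<noteq> 0"
  have "c / l = (l * c) * (inverse l)^2" using l by (simp add: field_simps power2_eq_square)
  hence "eta (c / l) = eta (l * c) * eta ((inverse l)^2)" using eta_mult[OF oddq] by metis
  thus ?thesis using eta_square[OF oddq] l by simp
qed

lemma card_sqrt_real: "real (card {u. u^2 = (a::'a)}) = 1 + real_of_int (eta a)"
proof -
  have "int (card {u. u^2 = a}) = 1 + eta a" by (rule card_sqrt[OF oddq])
  hence "real_of_int (int (card {u. u^2 = a})) = real_of_int (1 + eta a)" by simp
  thus ?thesis by simp
qed

lemma Nd_formula:
  assumes "\<forall>i<r. lam i \<noteq> (0::'a)"
  shows "real (Nd lam r c) =
     (if even r then real CARD('a) ^ r / real CARD('a) +
         real_of_int (eta ((-1) ^ (r div 2) * prod lam {..<r})) * real CARD('a) ^ (r div 2) / real CARD('a)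
          * (if c = 0 then real CARD('a) - 1 else -1)
      else real CARD('a) ^ r / real CARD('a) +
         real_of_int (eta ((-1) ^ (r div 2) * prod lam {..<r} * c)) * real CARD('a) ^ (r div 2))"
  using assms
proof (induction r arbitrary: c)
  case 0
  have "real CARD('a) > 0" by simp
  moreover have "eta (1::'a) = 1" unfolding eta_def by (auto intro: exI[of _ 1])
  ultimately show ?case by (simp add: Nd_0 field_simps)
next
  case (Suc r)
  define q where "q = real CARD('a)"
  have qpos: "q > 0" unfolding q_def by simp
  define l where "l = lam r"
  have l: "l \<noteq> 0" using Suc.prems l_def by auto
  have IH: "\<And>c. real (Nd lam r c) =
     (if even r then q ^ r / q +
         real_of_int (eta ((-1) ^ (r div 2) * prod lam {..<r})) * q ^ (r div 2) / q
          * (if c = 0 then q - 1 else -1)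
      else q ^ r / q +
         real_of_int (eta ((-1) ^ (r div 2) * prod lam {..<r} * c)) * q ^ (r div 2))"
    using Suc.IH Suc.prems unfolding q_def by auto
  have pr: "prod lam {..<Suc r} = prod lam {..<r} * l" by (simp add: l_def)
  have "real (Nd lam (Suc r) c) = (\<Sum>s\<in>UNIV. real (Nd lam r (c - l * s^2)))"
    by (simp add: Nd_Suc l_def)
  show ?case
  proof (cases "even r")
    case True
    define E where "E = real_of_int (eta ((-1) ^ (r div 2) * prod lam {..<r}))"
    have "real (Nd lam (Suc r) c) = (\<Sum>s\<in>UNIV. q ^ r / q + E * q ^ (r div 2) / q
          * (if c - l * s^2 = 0 then q - 1 else -1))"
      using \<open>real (Nd lam (Suc r) c) = _\<close> IH True unfolding E_def by simp
    also have "\<dots> = q * (q ^ r / q) + E * q ^ (r div 2) / q *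
          (\<Sum>s\<in>UNIV. (if c - l * s^2 = 0 then q - 1 else -1))"
      by (simp add: sum.distrib sum_distrib_left q_def)
    also have "(\<Sum>s\<in>(UNIV::'a set). (if c - l * s^2 = 0 then q - 1 else -1)) = q * card {s. c - l * s^2 = 0} - q"
      by (simp add: sum_if_count q_def)
    also have "{s. c - l * s^2 = 0} = {s. s^2 = c / l}" using l by (auto simp: field_simps)
    also have "real (card {s. s^2 = c / l}) = 1 + real_of_int (eta (l * c))"
      using card_sqrt_real eta_div[OF l] by simp
    finally have "real (Nd lam (Suc r) c) = q ^ r + E * real_of_int (eta (l * c)) * q ^ (r div 2)"
      using qpos by (simp add: field_simps)
    moreover have "E * real_of_int (eta (l * c)) = real_of_int (eta ((-1) ^ (Suc r div 2) * prod lam {..<Suc r} * c))"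
      unfolding E_def pr using True eta_mult[OF oddq]
      by (simp add: mult.assoc)
    ultimately show ?thesis using True qpos unfolding q_def by (simp add: field_simps)
  next
    case False
    define mu where "mu = (-1) ^ (r div 2) * prod lam {..<r}"
    have mu: "mu \<noteq> 0" unfolding mu_def using Suc.prems by auto
    have "real (Nd lam (Suc r) c) = (\<Sum>s\<in>UNIV. q ^ r / q + real_of_int (eta (mu * (c - l * s^2))) * q ^ (r div 2))"
      using \<open>real (Nd lam (Suc r) c) = _\<close> IH False unfolding mu_def by (simp add: mult.assoc)
    also have "\<dots> = q * (q ^ r / q) + q ^ (r div 2) * real_of_int (\<Sum>s\<in>UNIV. eta (mu * c + (- mu * l) * s^2))"
      by (simp add: sum.distrib sum_distrib_left q_def algebra_simps)
    also have "(\<Sum>s\<in>UNIV. eta (mu * c + (- mu * l) * s^2)) =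
       (if mu * c = 0 then (int CARD('a) - 1) * eta (- mu * l) else - eta (- mu * l))"
      by (rule sum_eta_gen[OF oddq]) (use mu l in auto)
    finally have "real (Nd lam (Suc r) c) = q ^ r + q ^ (r div 2) * real_of_int (eta (- mu * l)) *
        (if c = 0 then q - 1 else -1)"
      using qpos mu by (simp add: q_def)
    moreover have "- mu * l = (-1) ^ (Suc r div 2) * prod lam {..<Suc r}"
      unfolding mu_def pr using False by simp
    moreover have "Suc r div 2 = Suc (r div 2)" using False by presburger
    ultimately show ?thesis using False qpos unfolding q_def by (simp add: field_simps)
  qed
qed

end


lemma (in vector_space) idx_bij:
  fixes e :: "nat \<Rightarrow> 'b"
  assumes inj: "inj_on e {..<n}" and ind: "independent (e ` {..<n})"
  shows "bij_betw (\<lambda>c. \<Sum>i<n. c i *s e i) ({..<n} \<rightarrow>\<^sub>E UNIV) (span (e ` {..<n}))"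
proof (rule bij_betwI')
  fix c d :: "nat \<Rightarrow> 'a" assume c: "c \<in> {..<n} \<rightarrow>\<^sub>E UNIV" and d: "d \<in> {..<n} \<rightarrow>\<^sub>E UNIV"
  show "((\<Sum>i<n. c i *s e i) = (\<Sum>i<n. d i *s e i)) = (c = d)"
  proof
    assume eq: "(\<Sum>i<n. c i *s e i) = (\<Sum>i<n. d i *s e i)"
    define u where "u v = c (the_inv_into {..<n} e v) - d (the_inv_into {..<n} e v)" for v
    have "(\<Sum>v\<in>e ` {..<n}. u v *s v) = (\<Sum>i<n. u (e i) *s e i)"
      by (rule sum.reindex[OF inj, unfolded comp_def])
    also have "\<dots> = (\<Sum>i<n. (c i - d i) *s e i)"
      by (rule sum.cong) (auto simp: u_def the_inv_into_f_f[OF inj])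
    also have "\<dots> = (\<Sum>i<n. c i *s e i) - (\<Sum>i<n. d i *s e i)"
      by (simp add: scale_left_diff_distrib sum_subtractf)
    finally have z: "(\<Sum>v\<in>e ` {..<n}. u v *s v) = 0" using eq by simp
    have "c i = d i" for i
    proof (cases "i < n")
      case True
      have "u (e i) = 0" using independentD[OF ind _ _ z] True by auto
      thus ?thesis using True by (simp add: u_def the_inv_into_f_f[OF inj])
    next
      case False
      thus ?thesis using c d by (auto simp: PiE_def extensional_def)
    qed
    thus "c = d" by auto
  qed simp
next
  fix c :: "nat \<Rightarrow> 'a" assume "c \<in> {..<n} \<rightarrow>\<^sub>E UNIV"
  show "(\<Sum>i<n. c i *s e i) \<in> span (e ` {..<n})"
    by (intro span_sum span_scale span_base) auto
next
  fix x assume "x \<in> span (e ` {..<n})"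
  then obtain u where u: "x = (\<Sum>v\<in>e ` {..<n}. u v *s v)"
    using span_finite[of "e ` {..<n}"] by auto
  also have "\<dots> = (\<Sum>i<n. u (e i) *s e i)"
    by (rule sum.reindex[OF inj, unfolded comp_def])
  also have "\<dots> = (\<Sum>i<n. (restrict (\<lambda>i. u (e i)) {..<n}) i *s e i)"
    by (rule sum.cong) auto
  finally show "\<exists>c\<in>{..<n} \<rightarrow>\<^sub>E UNIV. x = (\<Sum>i<n. c i *s e i)"
    by (intro bexI[of _ "restrict (\<lambda>i. u (e i)) {..<n}"]) auto
qed

lemma card_span_idx:
  fixes s :: "'a::{field,finite} \<Rightarrow> 'b::ab_group_add \<Rightarrow> 'b" and e :: "nat \<Rightarrow> 'b"
  assumes vs: "vector_space s" and inj: "inj_on e {..<n}" and ind: "\<not> module.dependent s (e ` {..<n})"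
  shows "card (module.span s (e ` {..<n})) = CARD('a) ^ n"
proof -
  interpret vector_space s by fact
  have "card ({..<n} \<rightarrow>\<^sub>E (UNIV::'a set)) = card (span (e ` {..<n}))"
    by (rule bij_betw_same_card[OF idx_bij[OF inj ind]])
  thus ?thesis by (simp add: card_PiE)
qed

lemma card_subspace:
  fixes s :: "'a::{field,finite} \<Rightarrow> 'b::{ab_group_add,finite} \<Rightarrow> 'b"
  assumes vs: "vector_space s" and V: "module.subspace s V"
  shows "card V = CARD('a) ^ vector_space.dim s V"
proof -
  interpret vector_space s by fact
  obtain B where B: "B \<subseteq> V" "independent B" "V \<subseteq> span B" "card B = dim V"
    using basis_exists by blast
  have "finite B" by simp
  then obtain e where e: "bij_betw e {..<card B} B"
    using ex_bij_betw_nat_finite[of B] by (auto simp: atLeast0LessThan)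
  have eB: "e ` {..<card B} = B" using e by (simp add: bij_betw_def)
  have "span B = V" using B V by (simp add: span_subspace)
  hence "card V = card (span (e ` {..<card B}))" using eB by simp
  also have "\<dots> = CARD('a) ^ card B"
    by (rule card_span_idx[OF vs]) (use e B eB in \<open>auto simp: bij_betw_def\<close>)
  finally show ?thesis using B by simp
qed

lemma exists_subspace_card:
  fixes s :: "'a::{field,finite} \<Rightarrow> 'b::{ab_group_add,finite} \<Rightarrow> 'b"
  assumes vs: "vector_space s" and j: "j \<le> vector_space.dim s (UNIV::'b set)"
  shows "\<exists>W. module.subspace s W \<and> card W = CARD('a) ^ j"
proof -
  interpret vector_space s by fact
  obtain B where B0: "B \<subseteq> UNIV" and B: "independent B" "UNIV \<subseteq> span B" "card B = dim (UNIV::'b set)"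
    by (rule basis_exists)
  obtain B' where B': "B' \<subseteq> B" "card B' = j"
    using obtain_subset_with_card_n[of j B] j B by auto
  have ind: "independent B'" using independent_mono[OF B(1) B'(1)] .
  have "card (span B') = CARD('a) ^ dim (span B')"
    by (rule card_subspace[OF vs]) simp
  also have "dim (span B') = j" using dim_span_eq_card_independent[OF ind] B' by simp
  finally show ?thesis by (intro exI[of _ "span B'"]) simp
qed

lemma vs_escale:
  assumes "field_emb emb"
  shows "vector_space (escale emb)"
  using assms unfolding field_emb_def escale_def
  by unfold_locales (auto simp: algebra_simps)

lemma vs_fscale: "vector_space (fscale :: 'a::field \<Rightarrow> ('i \<Rightarrow> 'a) \<Rightarrow> ('i \<Rightarrow> 'a))"
  unfolding fscale_def
  by unfold_locales (auto simp: algebra_simps fun_eq_iff)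

lemma dim_UNIV_from_card:
  fixes s :: "'a::{field,finite} \<Rightarrow> 'b::{ab_group_add,finite} \<Rightarrow> 'b"
  assumes vs: "vector_space s" and c: "CARD('b) = CARD('a) ^ k"
  shows "vector_space.dim s (UNIV::'b set) = k"
proof -
  interpret vector_space s by fact
  have "CARD('b) = CARD('a) ^ dim (UNIV::'b set)"
    by (rule card_subspace[OF vs]) simp
  hence "CARD('a) ^ dim (UNIV::'b set) = CARD('a) ^ k" using c by simp
  moreover have "CARD('a) > 1"
  proof -
    have "card {0, 1::'a} = 2" by simp
    moreover have "card {0, 1::'a} \<le> CARD('a)" by (rule card_mono) auto
    ultimately show ?thesis by simp
  qed
  ultimately show ?thesis using power_inject_exp by blast
qed


section \<open>Quadratic forms: orthogonal bases\<close>

lemma bij_concat: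
  fixes a b :: nat
  assumes f: "bij_betw f {..<a} A" and g: "bij_betw g {..<b} B" and d: "A \<inter> B = {}"
  shows "bij_betw (\<lambda>i. if i < a then f i else g (i - a)) {..<a+b} (A \<union> B)"
proof -
  have fi: "inj_on f {..<a}" "f ` {..<a} = A" and gi: "inj_on g {..<b}" "g ` {..<b} = B"
    using f g by (auto simp: bij_betw_def)
  show ?thesis unfolding bij_betw_def
  proof
    show "inj_on (\<lambda>i. if i < a then f i else g (i - a)) {..<a+b}"
    proof (rule inj_onI)
      fix i j assume i: "i \<in> {..<a+b}" and j: "j \<in> {..<a+b}"
        and eq: "(if i < a then f i else g (i - a)) = (if j < a then f j else g (j - a))"
      show "i = j"
      proof (cases "i < a"; cases "j < a")
        assume "i < a" "j < a" thus ?thesis using eq fi(1) by (auto dest: inj_onD)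
      next
        assume "i < a" "\<not> j < a"
        moreover have "j - a < b" using j \<open>\<not> j < a\<close> by auto
        ultimately have "f i \<in> A" "g (j - a) \<in> B" using fi gi by auto
        thus ?thesis using eq d \<open>i < a\<close> \<open>\<not> j < a\<close> by auto
      next
        assume "\<not> i < a" "j < a"
        moreover have "i - a < b" using i \<open>\<not> i < a\<close> by auto
        ultimately have "f j \<in> A" "g (i - a) \<in> B" using fi gi by auto
        thus ?thesis using eq d \<open>\<not> i < a\<close> \<open>j < a\<close> by auto
      next
        assume "\<not> i < a" "\<not> j < a"
        hence "g (i - a) = g (j - a)" "i - a < b" "j - a < b" using eq i j by auto
        hence "i - a = j - a" using gi(1) by (auto dest: inj_onD)
        thus ?thesis using \<open>\<not> i < a\<close> \<open>\<not> j < a\<close> by simp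
      qed
    qed
  next
    show "(\<lambda>i. if i < a then f i else g (i - a)) ` {..<a+b} = A \<union> B"
    proof (rule set_eqI, rule iffI)
      fix x assume "x \<in> (\<lambda>i. if i < a then f i else g (i - a)) ` {..<a+b}"
      then obtain i where i: "i < a + b" "x = (if i < a then f i else g (i - a))" by (rule imageE) simp
      show "x \<in> A \<union> B"
      proof (cases "i < a")
        case True thus ?thesis using i fi by auto
      next
        case False
        hence "i - a < b" using i by auto
        thus ?thesis using i gi False by auto
      qed
    next
      fix x assume "x \<in> A \<union> B"
      thus "x \<in> (\<lambda>i. if i < a then f i else g (i - a)) ` {..<a+b}"
      proof
        assume "x \<in> A"
        then obtain i where "i < a" "x = f i" using fi by auto
        thus ?thesis by (intro image_eqI[of _ _ i]) auto
      next
        assume "x \<in> B"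
        then obtain j where "j < b" "x = g j" using gi by auto
        thus ?thesis by (intro image_eqI[of _ _ "a + j"]) auto
      qed
    qed
  qed
qed

locale qf_ctx =
  fixes emb :: "'a::{field,finite} \<Rightarrow> 'b::{field,finite}" and Q :: "'b \<Rightarrow> 'a"
  assumes emb: "field_emb emb" and qf: "is_quadratic_form emb Q" and oddq: "odd CARD('a)"
begin

sublocale V: vector_space "escale emb" by (rule vs_escale[OF emb])

abbreviation B where "B \<equiv> qf_bil Q"

lemma emb_add: "emb (x + y) = emb x + emb y" using emb unfolding field_emb_def by auto
lemma emb_mult: "emb (x * y) = emb x * emb y" using emb unfolding field_emb_def by auto
lemma emb_1: "emb 1 = 1" using emb unfolding field_emb_def by auto
lemma emb_inj: "inj emb" using emb unfolding field_emb_def by auto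
lemma emb_0: "emb 0 = 0" using emb_add[of 0 0] by (metis add.right_neutral add_left_cancel)

lemma Q_scale: "Q (emb a * x) = a ^ 2 * Q x" using qf unfolding is_quadratic_form_def by auto
lemma B_add1: "B (x + x') y = B x y + B x' y" using qf unfolding is_quadratic_form_def by auto
lemma B_add2: "B x (y + y') = B x y + B x y'" using qf unfolding is_quadratic_form_def by auto
lemma B_scale1: "B (emb a * x) y = a * B x y" using qf unfolding is_quadratic_form_def by auto
lemma B_scale2: "B x (emb a * y) = a * B x y" using qf unfolding is_quadratic_form_def by auto
lemma B_sym: "B x y = B y x" unfolding qf_bil_def by (simp add: add.commute)
lemma B_0_1: "B 0 y = 0" using B_add1[of 0 0 y] by (metis add.right_neutral add_left_cancel)
lemma B_0_2: "B x 0 = 0" using B_add2[of x 0 0] by (metis add.right_neutral add_left_cancel)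
lemma B_diff2: "B x (y - y') = B x y - B x y'" using B_add2[of x "y - y'" y'] by simp

lemma Q_0: "Q 0 = 0" using Q_scale[of 0 0] emb_0 by simp

lemma two_nz': "(2::'a) \<noteq> 0" using two_nz[OF oddq] .

lemma Q_B: "Q x = B x x"
proof -
  have "emb 2 = 2" using emb_add[of 1 1] emb_1 by simp
  hence "Q (x + x) = 4 * Q x" using Q_scale[of 2 x] by (simp add: mult_2[symmetric])
  thus ?thesis unfolding qf_bil_def using two_nz' by (simp add: field_simps)
qed

lemma Q_add: "Q (x + y) = Q x + Q y + 2 * B x y"
  unfolding qf_bil_def using two_nz' by (simp add: field_simps)

lemma B_sum2: "B x (\<Sum>i\<in>I. f i) = (\<Sum>i\<in>I. B x (f i))"
  by (induction I rule: infinite_finite_induct) (auto simp: B_0_2 B_add2)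

lemma B_sum1: "B (\<Sum>i\<in>I. f i) y = (\<Sum>i\<in>I. B (f i) y)"
  by (induction I rule: infinite_finite_induct) (auto simp: B_0_1 B_add1)

lemma orth_exists:
  assumes "V.subspace W"
  shows "\<exists>S. S \<subseteq> W \<and> \<not> V.dependent S \<and> W \<subseteq> V.span S \<and> (\<forall>x\<in>S. \<forall>y\<in>S. x \<noteq> y \<longrightarrow> B x y = 0)"
  using assms
proof (induction "card W" arbitrary: W rule: less_induct)
  case less
  show ?case
  proof (cases "\<forall>x\<in>W. Q x = 0")
    case True
    obtain S where S: "S \<subseteq> W" "\<not> V.dependent S" "W \<subseteq> V.span S" "card S = V.dim W"
      by (rule V.basis_exists)
    have "B x y = 0" if "x \<in> W" "y \<in> W" for x y
    proof -
      have "x + y \<in> W" using V.subspace_add[OF less.prems that] .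
      thus ?thesis using True that unfolding qf_bil_def by simp
    qed
    thus ?thesis using S by blast
  next
    case False
    then obtain v where v: "v \<in> W" "Q v \<noteq> 0" by auto
    define W' where "W' = {w \<in> W. B v w = 0}"
    have sW': "V.subspace W'"
    proof (rule V.subspaceI)
      show "0 \<in> W'" unfolding W'_def using V.subspace_0[OF less.prems] by (simp add: B_0_2)
    next
      fix x y assume "x \<in> W'" "y \<in> W'"
      thus "x + y \<in> W'" unfolding W'_def using V.subspace_add[OF less.prems] by (simp add: B_add2)
    next
      fix c x assume "x \<in> W'"
      thus "escale emb c x \<in> W'" unfolding W'_def using V.subspace_scale[OF less.prems]
        by (simp add: B_scale2 escale_def)
    qed
    have "v \<notin> W'" using v Q_B unfolding W'_def by simp
    hence "W' \<subset> W" using v unfolding W'_def by auto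
    hence "card W' < card W" by (simp add: psubset_card_mono)
    then obtain S' where S': "S' \<subseteq> W'" "\<not> V.dependent S'" "W' \<subseteq> V.span S'"
        "\<forall>x\<in>S'. \<forall>y\<in>S'. x \<noteq> y \<longrightarrow> B x y = 0"
      using less.hyps[OF _ sW'] by blast
    have spS': "V.span S' \<subseteq> W'" using V.span_minimal[OF S'(1) sW'] .
    have vS: "v \<notin> V.span S'" using spS' \<open>v \<notin> W'\<close> by auto
    have ind: "\<not> V.dependent (insert v S')" by (rule V.independent_insertI[OF vS S'(2)])
    have span: "W \<subseteq> V.span (insert v S')"
    proof
      fix w assume w: "w \<in> W"
      define c where "c = B v w / Q v"
      have "w - escale emb c v \<in> W"
        using V.subspace_diff[OF less.prems w V.subspace_scale[OF less.prems v(1)]] .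
      moreover have "B v (w - escale emb c v) = 0"
        using v(2) unfolding c_def escale_def by (simp add: B_diff2 B_scale2 Q_B[symmetric])
      ultimately have "w - escale emb c v \<in> W'" unfolding W'_def by simp
      hence "w - escale emb c v \<in> V.span (insert v S')"
        using S'(3) V.span_mono[of S' "insert v S'"] by auto
      moreover have "escale emb c v \<in> V.span (insert v S')"
        by (intro V.span_scale V.span_base) simp
      ultimately have "(w - escale emb c v) + escale emb c v \<in> V.span (insert v S')"
        by (rule V.span_add)
      thus "w \<in> V.span (insert v S')" by simp
    qed
    have orth: "\<forall>x\<in>insert v S'. \<forall>y\<in>insert v S'. x \<noteq> y \<longrightarrow> B x y = 0"
    proof (intro ballI impI)
      fix x y assume xy: "x \<in> insert v S'" "y \<in> insert v S'" "x \<noteq> y"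
      have vs: "B v s = 0" if "s \<in> S'" for s using that S'(1) unfolding W'_def by auto
      show "B x y = 0"
      proof (cases "x = v")
        case True
        thus ?thesis using xy vs by auto
      next
        case False
        hence x: "x \<in> S'" using xy by auto
        show ?thesis
        proof (cases "y = v")
          case True
          thus ?thesis using vs[OF x] B_sym[of x y] by simp
        next
          case False
          thus ?thesis using x xy S'(4) by auto
        qed
      qed
    qed
    have "insert v S' \<subseteq> W" using v S'(1) unfolding W'_def by auto
    thus ?thesis using ind span orth by blast
  qed
qed

lemma Q_sum_orth:
  assumes "finite I" "inj_on e I" "\<forall>i\<in>I. \<forall>j\<in>I. i \<noteq> j \<longrightarrow> B (e i) (e j) = 0"
  shows "Q (\<Sum>i\<in>I. emb (c i) * e i) = (\<Sum>i\<in>I. c i ^ 2 * Q (e i))"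
  using assms
proof (induction I rule: finite_induct)
  case empty
  thus ?case by (simp add: Q_0)
next
  case (insert j I)
  have "B (emb (c j) * e j) (\<Sum>i\<in>I. emb (c i) * e i) = (\<Sum>i\<in>I. c i * (c j * B (e j) (e i)))"
    by (simp add: B_sum2 B_scale1 B_scale2)
  also have "\<dots> = 0"
    using insert.prems insert.hyps by (intro sum.neutral) auto
  finally have "B (emb (c j) * e j) (\<Sum>i\<in>I. emb (c i) * e i) = 0" .
  moreover have "inj_on e I" "\<forall>i\<in>I. \<forall>j\<in>I. i \<noteq> j \<longrightarrow> B (e i) (e j) = 0"
    using insert.prems by (auto simp: inj_on_def)
  ultimately show ?case using insert.hyps insert.IH
    by (simp add: Q_add Q_scale)
qed

lemma B_coord:
  fixes n :: nat
  assumes "inj_on e {..<n}" "\<forall>i<n. \<forall>j<n. i \<noteq> j \<longrightarrow> B (e i) (e j) = 0" "i < n"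
  shows "B (e i) (\<Sum>j<n. emb (d j) * e j) = d i * Q (e i)"
proof -
  have s0: "(\<Sum>j\<in>{..<n} - {i}. d j * B (e i) (e j)) = 0"
    using assms(2,3) by (intro sum.neutral) auto
  have "B (e i) (\<Sum>j<n. emb (d j) * e j) = (\<Sum>j<n. d j * B (e i) (e j))"
    by (simp add: B_sum2 B_scale2)
  also have "\<dots> = d i * B (e i) (e i) + (\<Sum>j\<in>{..<n} - {i}. d j * B (e i) (e j))"
    using assms(3) by (subst sum.remove[of _ i]) auto
  also have "\<dots> = d i * Q (e i)" using s0 Q_B[of "e i"] by simp
  finally show ?thesis .
qed

end


lemma Nd_ext:
  assumes "r \<le> n"
  shows "card {c \<in> {..<n} \<rightarrow>\<^sub>E (UNIV::'a::{field,finite} set). (\<Sum>i<r. lam i * c i ^ 2) = z}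
         = CARD('a) ^ (n - r) * Nd lam r z"
  using assms
proof (induction n)
  case 0
  thus ?case by (simp add: Nd_def)
next
  case (Suc n)
  show ?case
  proof (cases "r = Suc n")
    case True
    thus ?thesis by (simp add: Nd_def)
  next
    case False
    hence r: "r \<le> n" using Suc.prems by simp
    have "card {c \<in> {..<Suc n} \<rightarrow>\<^sub>E (UNIV::'a set). (\<Sum>i<r. lam i * c i ^ 2) = z}
       = (\<Sum>s\<in>(UNIV::'a set). card {x \<in> {..<n} \<rightarrow>\<^sub>E (UNIV::'a set). (\<Sum>i<r. lam i * (x(n:=s)) i ^ 2) = z})"
      by (rule card_PiE_Suc)
    also have "\<dots> = (\<Sum>s\<in>(UNIV::'a set). card {x \<in> {..<n} \<rightarrow>\<^sub>E (UNIV::'a set). (\<Sum>i<r. lam i * x i ^ 2) = z})"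
    proof (rule sum.cong[OF refl])
      fix s
      have "(\<Sum>i<r. lam i * (x(n:=s)) i ^ 2) = (\<Sum>i<r. lam i * x i ^ 2)" for x :: "nat \<Rightarrow> 'a"
        by (rule sum.cong) (use r in auto)
      thus "card {x \<in> {..<n} \<rightarrow>\<^sub>E (UNIV::'a set). (\<Sum>i<r. lam i * (x(n:=s)) i ^ 2) = z} =
            card {x \<in> {..<n} \<rightarrow>\<^sub>E (UNIV::'a set). (\<Sum>i<r. lam i * x i ^ 2) = z}" by simp
    qed
    also have "\<dots> = CARD('a) * (CARD('a) ^ (n - r) * Nd lam r z)" using Suc.IH[OF r] by simp
    also have "\<dots> = CARD('a) ^ (Suc n - r) * Nd lam r z" using r by (simp add: Suc_diff_le)
    finally show ?thesis .
  qed
qed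

context qf_ctx
begin

lemma N0_formula:
  assumes d: "qf_diag emb m1 Q e lam r" and r: "r \<le> m1"
  shows "card {x. Q x = 0} = CARD('a) ^ (m1 - r) * Nd lam r 0"
proof -
  define \<phi> where "\<phi> c = (\<Sum>i<m1. emb (c i) * e i)" for c
  have u: "\<forall>x. \<exists>!c. c \<in> {..<m1} \<rightarrow>\<^sub>E UNIV \<and> x = \<phi> c"
    and qd: "\<forall>c. Q (\<phi> c) = (\<Sum>i<r. lam i * (c i) ^ 2)"
    using d unfolding qf_diag_def \<phi>_def by auto
  have inj: "inj_on \<phi> ({..<m1} \<rightarrow>\<^sub>E UNIV)"
  proof (rule inj_onI)
    fix c c' assume "c \<in> {..<m1} \<rightarrow>\<^sub>E UNIV" "c' \<in> {..<m1} \<rightarrow>\<^sub>E UNIV" "\<phi> c = \<phi> c'"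
    thus "c = c'" using u[rule_format, of "\<phi> c"] by auto
  qed
  have "{x. Q x = 0} = \<phi> ` {c \<in> {..<m1} \<rightarrow>\<^sub>E UNIV. Q (\<phi> c) = 0}"
  proof (rule set_eqI, rule iffI)
    fix x assume "x \<in> {x. Q x = 0}"
    moreover obtain c where "c \<in> {..<m1} \<rightarrow>\<^sub>E UNIV" "x = \<phi> c" using u by blast
    ultimately show "x \<in> \<phi> ` {c \<in> {..<m1} \<rightarrow>\<^sub>E UNIV. Q (\<phi> c) = 0}" by auto
  qed auto
  hence "card {x. Q x = 0} = card {c \<in> {..<m1} \<rightarrow>\<^sub>E UNIV. Q (\<phi> c) = 0}"
    using card_image[OF inj_on_subset[OF inj]] by auto
  also have "\<dots> = card {c \<in> {..<m1} \<rightarrow>\<^sub>E (UNIV::'a set). (\<Sum>i<r. lam i * c i ^ 2) = 0}"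
    using qd by simp
  also have "\<dots> = CARD('a) ^ (m1 - r) * Nd lam r 0" by (rule Nd_ext[OF r])
  finally show ?thesis .
qed

lemma diag_exists:
  assumes cb: "CARD('b) = CARD('a) ^ m1"
  shows "\<exists>e lam. qf_diag emb m1 Q e lam (qf_rank emb m1 Q)"
proof -
  obtain S where S: "\<not> V.dependent S" "UNIV \<subseteq> V.span S" and orthS: "\<forall>x\<in>S. \<forall>y\<in>S. x \<noteq> y \<longrightarrow> B x y = 0"
    using orth_exists[OF V.subspace_UNIV] by blast
  have dimU: "V.dim (UNIV::'b set) = m1" by (rule dim_UNIV_from_card[OF vs_escale[OF emb] cb])
  have cS: "card S = m1" using V.basis_card_eq_dim[of S UNIV] S dimU by auto
  define S1 where "S1 = {x\<in>S. Q x \<noteq> 0}"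
  define S0 where "S0 = {x\<in>S. Q x = 0}"
  define k where "k = card S1"
  have fin: "finite S1" "finite S0" by auto
  have S10: "S1 \<union> S0 = S" "S1 \<inter> S0 = {}" unfolding S1_def S0_def by auto
  have cS0: "k + card S0 = m1" using card_Un_disjoint[OF fin S10(2)] S10(1) cS unfolding k_def by simp
  obtain e1 where e1: "bij_betw e1 {..<k} S1"
    using ex_bij_betw_nat_finite[OF fin(1)] unfolding k_def by (auto simp: atLeast0LessThan)
  obtain e0 where e0: "bij_betw e0 {..<card S0} S0"
    using ex_bij_betw_nat_finite[OF fin(2)] by (auto simp: atLeast0LessThan)
  define e where "e i = (if i < k then e1 i else e0 (i - k))" for i
  have be: "bij_betw e {..<m1} S"
    using bij_concat[OF e1 e0 S10(2)] cS0 S10(1) unfolding e_def[abs_def] by simp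
  have inj: "inj_on e {..<m1}" and eS: "e ` {..<m1} = S" using be by (auto simp: bij_betw_def)
  have e_S1: "Q (e i) \<noteq> 0" if "i < k" for i
    using that e1 unfolding e_def S1_def by (auto simp: bij_betw_def)
  have e_S0: "Q (e i) = 0" if "k \<le> i" "i < m1" for i
  proof -
    have "i - k < card S0" using that cS0 by auto
    hence "e0 (i - k) \<in> S0" using e0 by (auto simp: bij_betw_def)
    thus ?thesis using that unfolding e_def S0_def by auto
  qed
  have orth: "\<forall>i<m1. \<forall>j<m1. i \<noteq> j \<longrightarrow> B (e i) (e j) = 0"
  proof (intro allI impI)
    fix i j assume "i < m1" "j < m1" "i \<noteq> j"
    hence "e i \<noteq> e j" "e i \<in> S" "e j \<in> S" using inj eS by (auto dest: inj_onD)
    thus "B (e i) (e j) = 0" using orthS by auto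
  qed
  have indE: "\<not> V.dependent (e ` {..<m1})" using S eS by simp
  have spanE: "V.span (e ` {..<m1}) = UNIV" using S eS by auto
  have bij: "bij_betw (\<lambda>c. \<Sum>i<m1. escale emb (c i) (e i)) ({..<m1} \<rightarrow>\<^sub>E UNIV) UNIV"
    using V.idx_bij[OF inj indE] spanE by simp
  have esc: "escale emb a x = emb a * x" for a x by (simp add: escale_def)
  have coords: "\<forall>x. \<exists>!c. c \<in> {..<m1} \<rightarrow>\<^sub>E UNIV \<and> x = (\<Sum>i<m1. emb (c i) * e i)"
  proof
    fix x
    have "x \<in> (\<lambda>c. \<Sum>i<m1. emb (c i) * e i) ` ({..<m1} \<rightarrow>\<^sub>E UNIV)"
      using bij unfolding bij_betw_def esc by simp
    then obtain c where c: "c \<in> {..<m1} \<rightarrow>\<^sub>E UNIV" "x = (\<Sum>i<m1. emb (c i) * e i)"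
      by blast
    moreover have "c' = c" if "c' \<in> {..<m1} \<rightarrow>\<^sub>E UNIV" "x = (\<Sum>i<m1. emb (c' i) * e i)" for c'
    proof -
      have "inj_on (\<lambda>c. \<Sum>i<m1. emb (c i) * e i) ({..<m1} \<rightarrow>\<^sub>E UNIV)"
        using bij unfolding bij_betw_def esc by simp
      moreover have "(\<Sum>i<m1. emb (c' i) * e i) = (\<Sum>i<m1. emb (c i) * e i)" using that c by simp
      ultimately show ?thesis using that(1) c(1) by (rule inj_onD)
    qed
    ultimately show "\<exists>!c. c \<in> {..<m1} \<rightarrow>\<^sub>E UNIV \<and> x = (\<Sum>i<m1. emb (c i) * e i)" by blast
  qed
  define lam where "lam i = Q (e i)" for i
  have qform: "Q (\<Sum>i<m1. emb (c i) * e i) = (\<Sum>i<k. lam i * c i ^ 2)" for c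
  proof -
    have "Q (\<Sum>i<m1. emb (c i) * e i) = (\<Sum>i<m1. c i ^ 2 * Q (e i))"
      by (rule Q_sum_orth) (use inj orth in auto)
    also have "\<dots> = (\<Sum>i<k. c i ^ 2 * Q (e i))"
      by (rule sum.mono_neutral_right) (use cS0 e_S0 in auto)
    finally show ?thesis unfolding lam_def by (simp add: mult.commute)
  qed
  have k_m1: "k \<le> m1" using cS0 by simp
  define R where "R = {x. \<forall>y. B x y = 0}"
  define E0 where "E0 = e ` {k..<m1}"
  have sR: "V.subspace R"
  proof (rule V.subspaceI)
    show "0 \<in> R" unfolding R_def by (simp add: B_0_1)
  next
    fix x y assume "x \<in> R" "y \<in> R" thus "x + y \<in> R" unfolding R_def by (simp add: B_add1)
  next
    fix c x assume "x \<in> R" thus "escale emb c x \<in> R" unfolding R_def by (simp add: B_scale1 escale_def)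
  qed
  have E0R: "E0 \<subseteq> R"
  proof
    fix z assume "z \<in> E0"
    then obtain i where i: "k \<le> i" "i < m1" "z = e i" unfolding E0_def by auto
    show "z \<in> R" unfolding R_def
    proof (intro CollectI allI)
      fix y
      obtain d where "y = (\<Sum>j<m1. emb (d j) * e j)" using coords by blast
      hence "B (e i) y = d i * Q (e i)" using B_coord[OF inj orth i(2)] by simp
      thus "B z y = 0" using e_S0[OF i(1,2)] i(3) by simp
    qed
  qed
  have RE0: "R \<subseteq> V.span E0"
  proof
    fix x assume x: "x \<in> R"
    obtain c where c: "c \<in> {..<m1} \<rightarrow>\<^sub>E UNIV" "x = (\<Sum>j<m1. emb (c j) * e j)" using coords by blast
    have cz: "c i = 0" if "i < k" for i
    proof -
      have "B (e i) x = c i * Q (e i)" using B_coord[of e m1 i c] inj orth that k_m1 c(2) by simp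
      moreover have "B (e i) x = 0" using x B_sym[of "e i" x] unfolding R_def by simp
      ultimately show ?thesis using e_S1[OF that] by simp
    qed
    have "x = (\<Sum>j\<in>{k..<m1}. emb (c j) * e j)"
      unfolding c(2) by (rule sum.mono_neutral_right) (use cz emb_0 in auto)
    also have "\<dots> \<in> V.span E0"
      unfolding E0_def by (intro V.span_sum) (metis V.span_base V.span_scale escale_def imageI)
    finally show "x \<in> V.span E0" .
  qed
  have RS: "R = V.span E0" using RE0 V.span_minimal[OF E0R sR] by auto
  have indE0: "\<not> V.dependent E0"
  proof -
    have "E0 \<subseteq> S" unfolding E0_def using eS by auto
    thus ?thesis using V.independent_mono[OF S(1)] by blast
  qed
  have cE0: "card E0 = m1 - k"
    unfolding E0_def by (subst card_image) (auto intro: inj_on_subset[OF inj])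
  have "V.dim R = m1 - k" using RS V.dim_span_eq_card_independent[OF indE0] cE0 by simp
  hence rk: "qf_rank emb m1 Q = k" unfolding qf_rank_def R_def using k_m1 by simp
  have "qf_diag emb m1 Q e lam k"
    unfolding qf_diag_def using coords qform e_S1 unfolding lam_def by auto
  thus ?thesis using rk by auto
qed

end


section \<open>The trace\<close>

lemma sum_shift_lemma: "(\<Sum>i<n. f (Suc i)) + f 0 = (\<Sum>i<n. f i) + (f n :: 'a::comm_monoid_add)"
proof (induction n)
  case (Suc n)
  have "(\<Sum>i<Suc n. f (Suc i)) + f 0 = f (Suc n) + ((\<Sum>i<n. f (Suc i)) + f 0)" by (simp add: add_ac)
  also have "\<dots> = f (Suc n) + ((\<Sum>i<n. f i) + f n)" using Suc.IH by simp
  also have "\<dots> = (\<Sum>i<Suc n. f i) + f (Suc n)" by (simp add: add_ac)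
  finally show ?case .
qed simp

locale tr_ctx =
  fixes emb :: "'a::{field,finite} \<Rightarrow> 'c::{field,finite}" and m2 :: nat and p m :: nat
  assumes emb: "field_emb emb" and cc: "CARD('c) = CARD('a) ^ m2" and m2: "m2 \<ge> 1"
    and p: "prime p" and ca: "CARD('a) = p ^ m"
begin

lemma emb_add: "emb (x + y) = emb x + emb y" using emb unfolding field_emb_def by auto
lemma emb_mult: "emb (x * y) = emb x * emb y" using emb unfolding field_emb_def by auto
lemma emb_1: "emb 1 = 1" using emb unfolding field_emb_def by auto
lemma emb_inj: "inj emb" using emb unfolding field_emb_def by auto
lemma emb_0: "emb 0 = 0" using emb_add[of 0 0] by (metis add.right_neutral add_left_cancel)
lemma emb_pow: "emb (x ^ n) = emb x ^ n" by (induction n) (simp_all add: emb_1 emb_mult)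
lemma emb_of_nat: "emb (of_nat n) = of_nat n" by (induction n) (simp_all add: emb_0 emb_1 emb_add)


lemma q_ge2: "CARD('a) \<ge> 2"
proof -
  have "card {0, 1::'a} = 2" by simp
  moreover have "card {0, 1::'a} \<le> CARD('a)" by (rule card_mono) auto
  ultimately show ?thesis by simp
qed

lemma char_c: "CHAR('c) = p"
proof -
  have "CHAR('a) = p" by (rule ff_CHAR_eq[OF p ca])
  hence "of_nat p = (0::'a)" by (metis of_nat_CHAR)
  hence "of_nat p = (0::'c)" using emb_of_nat[of p] emb_0 by simp
  hence "CHAR('c) dvd p" by (simp add: of_nat_eq_0_iff_char_dvd)
  moreover have "CHAR('c) \<noteq> 1" using ff_prime_CHAR[where 'a='c] by auto
  ultimately show ?thesis using p prime_nat_iff by blast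
qed

lemma frob_add: "(x + y :: 'c) ^ (CARD('a) ^ i) = x ^ (CARD('a) ^ i) + y ^ (CARD('a) ^ i)"
  by (rule freshmans_dream') (simp_all add: char_c p ca power_mult[symmetric])

lemma frob_sum: "(\<Sum>j\<in>A. f j :: 'c) ^ (CARD('a) ^ i) = (\<Sum>j\<in>A. f j ^ (CARD('a) ^ i))"
  by (rule freshmans_dream_sum') (simp_all add: char_c p ca power_mult[symmetric])

lemma emb_frob: "emb c ^ (CARD('a) ^ i) = emb c"
  using emb_pow[of c "CARD('a) ^ i"] ff_pow_card_pow[of c i] by simp

definition T :: "'c \<Rightarrow> 'c" where "T y = (\<Sum>i<m2. y ^ (CARD('a) ^ i))"

lemma T_frob: "T y ^ CARD('a) = T y"
proof -
  have "T y ^ CARD('a) = T y ^ (CARD('a) ^ 1)" by simp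
  also have "\<dots> = (\<Sum>i<m2. (y ^ (CARD('a) ^ i)) ^ (CARD('a) ^ 1))" unfolding T_def by (rule frob_sum)
  also have "\<dots> = (\<Sum>i<m2. y ^ (CARD('a) ^ Suc i))" by (simp add: power_mult[symmetric] mult.commute)
  also have "\<dots> = T y"
  proof -
    have "y ^ (CARD('a) ^ m2) = y" using ff_pow_card[of y] cc by simp
    thus ?thesis using sum_shift_lemma[where n=m2 and f="\<lambda>i. y ^ (CARD('a) ^ i)"] unfolding T_def by simp
  qed
  finally show ?thesis .
qed

lemma fixed_range: "{z::'c. z ^ CARD('a) = z} = range emb"
proof -
  define P :: "'c poly" where "P = monom 1 CARD('a) - [:0, 1:]"
  have "coeff P CARD('a) = 1" using q_ge2 unfolding P_def by (simp add: coeff_pCons split: nat.split)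
  hence P0: "P \<noteq> 0" by auto
  have "degree P \<le> CARD('a)" unfolding P_def
    by (rule degree_le) (auto simp: coeff_pCons split: nat.split)
  hence cP: "card {z. poly P z = 0} \<le> CARD('a)" using card_poly_roots_bound[OF P0] by linarith
  have pP: "poly P z = z ^ CARD('a) - z" for z unfolding P_def by (simp add: poly_monom)
  have sub: "range emb \<subseteq> {z::'c. z ^ CARD('a) = z}" using emb_frob[of _ 1] by auto
  have "card (range emb) = CARD('a)" using card_image[OF emb_inj] by simp
  moreover have "card {z::'c. z ^ CARD('a) = z} \<le> CARD('a)" using cP pP by simp
  ultimately show ?thesis using sub by (metis card_subset_eq finite le_antisym card_mono)
qed

lemma T_range: "T y \<in> range emb" using T_frob fixed_range by auto

lemma emb_trace: "emb (trace emb m2 y) = T y"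
  unfolding trace_def T_def[symmetric]
  by (rule f_the_inv_into_f[OF emb_inj T_range])

lemma trace_add: "trace emb m2 (y + z) = trace emb m2 y + trace emb m2 z"
proof -
  have "T (y + z) = T y + T z" unfolding T_def by (simp add: frob_add sum.distrib)
  hence "emb (trace emb m2 (y + z)) = emb (trace emb m2 y + trace emb m2 z)"
    by (simp add: emb_trace emb_add)
  thus ?thesis using emb_inj by (simp add: inj_eq)
qed

lemma trace_scale: "trace emb m2 (emb c * y) = c * trace emb m2 y"
proof -
  have "T (emb c * y) = emb c * T y" unfolding T_def
    by (simp add: power_mult_distrib emb_frob sum_distrib_left)
  hence "emb (trace emb m2 (emb c * y)) = emb (c * trace emb m2 y)"
    by (simp add: emb_trace emb_mult)
  thus ?thesis using emb_inj by (simp add: inj_eq)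
qed

lemma trace_0: "trace emb m2 0 = 0" using trace_add[of 0 0] by (metis add.right_neutral add_left_cancel)

lemma trace_nonzero: "\<exists>y. trace emb m2 y \<noteq> 0"
proof (rule ccontr)
  assume "\<not> (\<exists>y. trace emb m2 y \<noteq> 0)"
  hence allz: "T y = 0" for y using emb_trace[of y] emb_0 by auto
  define P :: "'c poly" where "P = (\<Sum>i<m2. monom 1 (CARD('a) ^ i))"
  have cP: "coeff P j = (\<Sum>i<m2. if CARD('a) ^ i = j then 1 else 0)" for j
    unfolding P_def by (simp add: coeff_sum)
  have inj: "CARD('a) ^ i = CARD('a) ^ j \<longleftrightarrow> i = j" for i j using q_ge2 by (simp add: power_inject_exp)
  have "coeff P (CARD('a) ^ (m2 - 1)) = (\<Sum>i<m2. if i = m2 - 1 then 1 else 0)"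
    unfolding cP by (rule sum.cong) (simp_all add: inj)
  also have "\<dots> = 1" using m2 by simp
  finally have P0: "P \<noteq> 0" by auto
  have "degree P \<le> CARD('a) ^ (m2 - 1)"
  proof (rule degree_le, intro allI impI)
    fix j assume j: "CARD('a) ^ (m2 - 1) < j"
    have "CARD('a) ^ i \<noteq> j" if "i < m2" for i
    proof -
      have "CARD('a) ^ i \<le> CARD('a) ^ (m2 - 1)" using that q_ge2 by (intro power_increasing) auto
      thus ?thesis using j by auto
    qed
    thus "coeff P j = 0" unfolding cP by (intro sum.neutral) auto
  qed
  moreover have "card {z. poly P z = 0} \<le> degree P" by (rule card_poly_roots_bound[OF P0])
  moreover have "poly P z = T z" for z unfolding P_def T_def by (simp add: poly_sum poly_monom)
  ultimately have "CARD('c) \<le> CARD('a) ^ (m2 - 1)" using allz by simp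
  moreover have "CARD('a) ^ (m2 - 1) < CARD('a) ^ m2" using q_ge2 m2 by (intro power_strict_increasing) auto
  ultimately show False using cc by simp
qed

lemma fiber_card:
  assumes b: "b \<noteq> 0"
  shows "card {y::'c. trace emb m2 (b * y) = t} = CARD('a) ^ (m2 - 1)"
proof -
  obtain y1 where y1: "trace emb m2 y1 \<noteq> 0" using trace_nonzero by blast
  define F where "F t = {y::'c. trace emb m2 (b * y) = t}" for t
  have shift: "card (F t) = card (F 0)" for t
  proof -
    define yt where "yt = emb (t / trace emb m2 y1) * y1 / b"
    have tyt: "trace emb m2 (b * yt) = t"
      using b y1 unfolding yt_def by (simp add: trace_scale)
    have "F t = (\<lambda>y. y + yt) ` F 0"
    proof (rule set_eqI, rule iffI)
      fix y assume "y \<in> F t"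
      hence "y - yt \<in> F 0" unfolding F_def using tyt trace_add[of "b * (y - yt)" "b * yt"]
        by (simp add: algebra_simps)
      thus "y \<in> (\<lambda>y. y + yt) ` F 0" by (intro image_eqI[of _ _ "y - yt"]) auto
    next
      fix y assume "y \<in> (\<lambda>y. y + yt) ` F 0"
      then obtain z where "z \<in> F 0" "y = z + yt" by auto
      thus "y \<in> F t" unfolding F_def using tyt trace_add[of "b * z" "b * yt"]
        by (simp add: algebra_simps)
    qed
    thus ?thesis by (simp add: card_image inj_on_def)
  qed
  have "UNIV = (\<Union>t. F t)" unfolding F_def by auto
  hence "CARD('c) = card (\<Union>t. F t)" by simp
  also have "\<dots> = (\<Sum>t\<in>UNIV. card (F t))"
    by (rule card_UN_disjoint) (auto simp: F_def)
  also have "\<dots> = (\<Sum>t\<in>(UNIV::'a set). card (F 0))" by (rule sum.cong[OF refl shift])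
  also have "\<dots> = CARD('a) * card (F 0)" by simp
  finally have "CARD('a) ^ m2 = CARD('a) * card (F 0)" using cc by simp
  moreover have "CARD('a) ^ m2 = CARD('a) * CARD('a) ^ (m2 - 1)" using m2 by (metis Suc_diff_1 less_le_trans zero_less_one power_Suc)
  ultimately have "card (F 0) = CARD('a) ^ (m2 - 1)" using q_ge2 by simp
  thus ?thesis using shift unfolding F_def by simp
qed

end


definition cw :: "('a::{field,finite} \<Rightarrow> 'c::field) \<Rightarrow> nat \<Rightarrow> ('b::zero \<Rightarrow> 'a) \<Rightarrow> 'a \<Rightarrow> 'c \<Rightarrow> ('b \<times> 'c \<Rightarrow> 'a)" where
  "cw emb2 m2 Q a b = (\<lambda>(x, y). if (x, y) \<in> Fstar then a * Q x + trace emb2 m2 (b * y) else 0)"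

lemma code_Q_cw: "code_Q emb2 m2 Q = {cw emb2 m2 Q a b | a b. True}"
  unfolding code_Q_def cw_def by simp

lemma card_pairs: "card {(x, y). P x y} = (\<Sum>x\<in>(UNIV::'x::finite set). card {y::'y::finite. P x y})"
proof -
  have "{(x, y). P x y} = (SIGMA x:(UNIV::'x set). {y::'y. P x y})" by auto
  thus ?thesis by simp
qed

lemma card_not: "card {y::'y::finite. \<not> P y} = CARD('y) - card {y. P y}"
proof -
  have "{y::'y. \<not> P y} = UNIV - {y. P y}" by auto
  thus ?thesis by (simp add: card_Diff_subset)
qed

locale code_ctx = Q1: qf_ctx emb1 Q + T2: tr_ctx emb2 m2 p m
  for emb1 :: "'a::{field,finite} \<Rightarrow> 'b::{field,finite}" and Q :: "'b \<Rightarrow> 'a"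
    and emb2 :: "'a \<Rightarrow> 'c::{field,finite}" and m2 p m :: nat +
  fixes m1 :: nat
  assumes cb: "CARD('b) = CARD('a) ^ m1" and Qnz: "Q \<noteq> (\<lambda>_. 0)"
begin

abbreviation c where "c \<equiv> cw emb2 m2 Q"
abbreviation tr where "tr \<equiv> trace emb2 m2"
abbreviation wt :: "('b \<times> 'c \<Rightarrow> 'a) \<Rightarrow> nat" where "wt g \<equiv> card {i \<in> Fstar. g i \<noteq> 0}"
abbreviation N0 where "N0 \<equiv> card {x::'b. Q x = 0}"

lemma tr_diff: "tr (x - y) = tr x - tr y"
  using T2.trace_add[of "x - y" y] by simp

lemma c_add: "c a b + c a' b' = c (a + a') (b + b')"
  unfolding cw_def by (auto simp: fun_eq_iff T2.trace_add algebra_simps)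

lemma c_diff: "c a b - c a' b' = c (a - a') (b - b')"
  unfolding cw_def by (auto simp: fun_eq_iff tr_diff algebra_simps)

lemma c_scale: "fscale t (c a b) = c (t * a) (emb2 t * b)"
  unfolding cw_def fscale_def
  by (auto simp: fun_eq_iff T2.trace_scale[symmetric] algebra_simps mult.left_commute)

lemma c_00: "c 0 0 = 0" unfolding cw_def by (auto simp: fun_eq_iff T2.trace_0)

lemma nz_set: "{i \<in> Fstar. c a b i \<noteq> 0} = {(x, y). a * Q x + tr (b * y) \<noteq> 0}"
  unfolding cw_def Fstar_def using Q1.Q_0 T2.trace_0 by (auto split: if_splits)

lemma wt_b: assumes "b \<noteq> 0" shows "wt (c a b) = CARD('a) ^ m1 * (CARD('a) ^ m2 - CARD('a) ^ (m2 - 1))"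
proof -
  have "wt (c a b) = (\<Sum>x\<in>(UNIV::'b set). card {y::'c. a * Q x + tr (b * y) \<noteq> 0})"
    unfolding nz_set by (rule card_pairs)
  also have "\<dots> = (\<Sum>x\<in>(UNIV::'b set). CARD('a) ^ m2 - CARD('a) ^ (m2 - 1))"
  proof (rule sum.cong[OF refl])
    fix x
    have "{y::'c. a * Q x + tr (b * y) \<noteq> 0} = {y. \<not> tr (b * y) = - (a * Q x)}"
      by (auto simp: add_eq_0_iff)
    hence "card {y::'c. a * Q x + tr (b * y) \<noteq> 0} = CARD('c) - card {y. tr (b * y) = - (a * Q x)}"
      using card_not by simp
    thus "card {y::'c. a * Q x + tr (b * y) \<noteq> 0} = CARD('a) ^ m2 - CARD('a) ^ (m2 - 1)"
      using T2.fiber_card[OF assms] T2.cc by simp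
  qed
  finally show ?thesis using cb by simp
qed

lemma wt_a: assumes "a \<noteq> 0" shows "wt (c a 0) = (CARD('a) ^ m1 - N0) * CARD('a) ^ m2"
proof -
  have "wt (c a 0) = (\<Sum>x\<in>(UNIV::'b set). card {y::'c. a * Q x + tr (0 * y) \<noteq> 0})"
    unfolding nz_set by (rule card_pairs)
  also have "\<dots> = (\<Sum>x\<in>(UNIV::'b set). if Q x = 0 then 0 else CARD('a) ^ m2)"
    by (rule sum.cong[OF refl]) (use assms T2.trace_0 T2.cc in auto)
  also have "\<dots> = card {x::'b. Q x \<noteq> 0} * CARD('a) ^ m2"
    by (simp add: sum.If_cases Int_def)
  also have "card {x::'b. Q x \<noteq> 0} = CARD('a) ^ m1 - N0" using card_not[of "\<lambda>x. Q x = 0"] cb by simp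
  finally show ?thesis .
qed

lemma wt_0: "wt (c 0 0) = 0" using c_00 by simp

lemma N0_lt: "N0 < CARD('a) ^ m1"
proof -
  obtain x where "Q x \<noteq> 0" using Qnz by auto
  hence "{x. Q x = 0} \<subset> (UNIV::'b set)" by auto
  hence "N0 < CARD('b)" by (simp add: psubset_card_mono)
  thus ?thesis using cb by simp
qed

lemma q_ge2': "CARD('a) \<ge> 2" by (rule T2.q_ge2)

lemma c_zero_iff: "c a b = 0 \<longleftrightarrow> a = 0 \<and> b = 0"
proof
  assume z: "c a b = 0"
  have wz: "wt (c a b) = 0" using z by simp
  have b: "b = 0"
  proof (rule ccontr)
    assume "b \<noteq> 0"
    hence "wt (c a b) = CARD('a) ^ m1 * (CARD('a) ^ m2 - CARD('a) ^ (m2 - 1))" by (rule wt_b)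
    moreover have "CARD('a) ^ (m2 - 1) < CARD('a) ^ m2" using q_ge2' T2.m2
      by (intro power_strict_increasing) auto
    ultimately show False using wz by simp
  qed
  moreover have "a = 0"
  proof (rule ccontr)
    assume "a \<noteq> 0"
    hence "wt (c a 0) = (CARD('a) ^ m1 - N0) * CARD('a) ^ m2" by (rule wt_a)
    thus False using wz b N0_lt by simp
  qed
  ultimately show "a = 0 \<and> b = 0" by simp
qed (simp add: c_00)

lemma c_inj: "c a b = c a' b' \<longleftrightarrow> a = a' \<and> b = b'"
  using c_zero_iff[of "a - a'" "b - b'"] c_diff[of a b a' b'] by auto

end


context code_ctx
begin

sublocale F: vector_space "fscale :: 'a \<Rightarrow> ('b \<times> 'c \<Rightarrow> 'a) \<Rightarrow> ('b \<times> 'c \<Rightarrow> 'a)"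
  by (rule vs_fscale)

lemma card_K: "F.subspace K \<Longrightarrow> card K = CARD('a) ^ F.dim K"
  by (rule card_subspace[OF vs_fscale])

lemma fscale_apply: "fscale t g i = t * g i" unfolding fscale_def by simp

lemma fiber_nz:
  assumes sK: "F.subspace K" and cK: "card K = CARD('a) ^ r" and r: "r \<ge> 1"
    and i: "i \<in> supp_sub Fstar K"
  shows "card {g\<in>K. g i \<noteq> 0} = CARD('a) ^ r - CARD('a) ^ (r - 1)"
proof -
  obtain g0 where g0: "g0 \<in> K" "g0 i \<noteq> 0" using i unfolding supp_sub_def by auto
  define g1 where "g1 = fscale (inverse (g0 i)) g0"
  have g1: "g1 \<in> K" "g1 i = 1" unfolding g1_def using F.subspace_scale[OF sK g0(1)] g0(2)
    by (auto simp: fscale_apply)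
  define K0 where "K0 = {g\<in>K. g i = 0}"
  define \<phi> where "\<phi> = (\<lambda>(t, h). fscale t g1 + h)"
  have "bij_betw \<phi> ((UNIV::'a set) \<times> K0) K"
  proof (rule bij_betwI')
    fix x y assume "x \<in> (UNIV::'a set) \<times> K0" "y \<in> (UNIV::'a set) \<times> K0"
    then obtain t h t' h' where xy: "x = (t, h)" "y = (t', h')" "h \<in> K0" "h' \<in> K0" by auto
    show "(\<phi> x = \<phi> y) = (x = y)"
    proof
      assume e: "\<phi> x = \<phi> y"
      hence "(fscale t g1 + h) i = (fscale t' g1 + h') i" unfolding \<phi>_def xy by simp
      hence "t = t'" using xy g1 unfolding K0_def by (simp add: fscale_apply)
      moreover have "h = h'" using e calculation unfolding \<phi>_def xy by simp
      ultimately show "x = y" using xy by simp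
    qed simp
  next
    fix x assume "x \<in> (UNIV::'a set) \<times> K0"
    then obtain t h where "x = (t, h)" "h \<in> K" unfolding K0_def by auto
    thus "\<phi> x \<in> K" unfolding \<phi>_def using F.subspace_add[OF sK F.subspace_scale[OF sK g1(1)]] by simp
  next
    fix g assume g: "g \<in> K"
    have "g - fscale (g i) g1 \<in> K0"
      unfolding K0_def using F.subspace_diff[OF sK g F.subspace_scale[OF sK g1(1)]] g1(2)
      by (simp add: fscale_apply)
    moreover have "g = \<phi> (g i, g - fscale (g i) g1)" unfolding \<phi>_def by simp
    ultimately show "\<exists>x\<in>(UNIV::'a set) \<times> K0. g = \<phi> x" by blast
  qed
  hence "card ((UNIV::'a set) \<times> K0) = card K" by (rule bij_betw_same_card)
  hence cK0: "CARD('a) * card K0 = CARD('a) ^ r" using cK by (simp add: card_cartesian_product)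
  have "CARD('a) ^ r = CARD('a) * CARD('a) ^ (r - 1)" using r by (metis Suc_diff_1 less_le_trans zero_less_one power_Suc)
  hence cK0': "card K0 = CARD('a) ^ (r - 1)" using cK0 q_ge2' by simp
  have "{g\<in>K. g i \<noteq> 0} = K - K0" unfolding K0_def by auto
  hence "card {g\<in>K. g i \<noteq> 0} = card K - card K0" by (simp add: card_Diff_subset K0_def)
  thus ?thesis using cK cK0' by simp
qed

lemma count_identity:
  assumes sK: "F.subspace K" and cK: "card K = CARD('a) ^ r" and r: "r \<ge> 1"
  shows "(\<Sum>g\<in>K. wt g) = card (supp_sub Fstar K) * (CARD('a) ^ r - CARD('a) ^ (r - 1))"
proof -
  have "(\<Sum>g\<in>K. wt g) = (\<Sum>g\<in>K. \<Sum>i\<in>Fstar. if g i \<noteq> 0 then 1 else 0)"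
    by (rule sum.cong[OF refl]) (simp add: sum.inter_filter[symmetric])
  also have "\<dots> = (\<Sum>i\<in>Fstar. \<Sum>g\<in>K. if g i \<noteq> 0 then 1 else 0)" by (rule sum.swap)
  also have "\<dots> = (\<Sum>i\<in>Fstar. card {g\<in>K. g i \<noteq> 0})"
    by (rule sum.cong[OF refl]) (simp add: sum.inter_filter[symmetric])
  also have "\<dots> = (\<Sum>i\<in>Fstar. if i \<in> supp_sub Fstar K then CARD('a) ^ r - CARD('a) ^ (r - 1) else 0)"
  proof (rule sum.cong[OF refl])
    fix i :: "'b \<times> 'c" assume "i \<in> Fstar"
    show "card {g\<in>K. g i \<noteq> 0} = (if i \<in> supp_sub Fstar K then CARD('a) ^ r - CARD('a) ^ (r - 1) else 0)"
    proof (cases "i \<in> supp_sub Fstar K")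
      case True thus ?thesis using fiber_nz[OF sK cK r] by simp
    next
      case False
      hence "{g\<in>K. g i \<noteq> 0} = {}" using \<open>i \<in> Fstar\<close> unfolding supp_sub_def by auto
      thus ?thesis using False by simp
    qed
  qed
  also have "\<dots> = card (supp_sub Fstar K) * (CARD('a) ^ r - CARD('a) ^ (r - 1))"
  proof -
    have "supp_sub Fstar K \<subseteq> Fstar" unfolding supp_sub_def by auto
    hence "Fstar \<inter> supp_sub Fstar K = supp_sub Fstar K" by auto
    thus ?thesis by (simp add: sum.If_cases)
  qed
  finally show ?thesis .
qed

definition Wb :: real where "Wb = real (CARD('a) ^ m1 * (CARD('a) ^ m2 - CARD('a) ^ (m2 - 1)))"
definition W0 :: real where "W0 = real ((CARD('a) ^ m1 - N0) * CARD('a) ^ m2)"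

lemma A_cases:
  assumes sK: "F.subspace K"
  shows "{a. c a 0 \<in> K} = {0} \<or> {a. c a 0 \<in> K} = UNIV"
proof (cases "\<exists>a0. a0 \<noteq> 0 \<and> c a0 0 \<in> K")
  case True
  then obtain a0 where a0: "a0 \<noteq> 0" "c a0 0 \<in> K" by auto
  have "c a 0 \<in> K" for a
  proof -
    have "fscale (a / a0) (c a0 0) \<in> K" by (rule F.subspace_scale[OF sK a0(2)])
    thus ?thesis using a0(1) by (simp add: c_scale)
  qed
  thus ?thesis by auto
next
  case False
  moreover have "c 0 0 \<in> K" using F.subspace_0[OF sK] c_00 by simp
  ultimately show ?thesis by auto
qed

lemma wt_sum_param:
  assumes sK: "F.subspace K" and KC: "K \<subseteq> code_Q emb2 m2 Q" and cK: "card K = CARD('a) ^ r"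
  shows "real (\<Sum>g\<in>K. wt g) = (real (CARD('a) ^ r) - real (card {a. c a 0 \<in> K})) * Wb
           + (real (card {a. c a 0 \<in> K}) - 1) * W0"
proof -
  define P where "P = {(a, b). c a b \<in> K}"
  define A where "A = {a. c a 0 \<in> K}"
  have injP: "inj_on (\<lambda>(a, b). c a b) P" by (auto simp: inj_on_def c_inj)
  have KP: "K = (\<lambda>(a, b). c a b) ` P"
  proof
    show "K \<subseteq> (\<lambda>(a, b). c a b) ` P"
    proof
      fix g assume "g \<in> K"
      then obtain a b where "g = c a b" using KC unfolding code_Q_cw by auto
      thus "g \<in> (\<lambda>(a, b). c a b) ` P" using \<open>g \<in> K\<close> unfolding P_def by auto
    qed
  qed (auto simp: P_def)
  have cP: "card P = CARD('a) ^ r" using cK KP card_image[OF injP] by simp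
  have "(\<Sum>g\<in>K. wt g) = (\<Sum>x\<in>P. wt ((\<lambda>(a, b). c a b) x))"
    unfolding KP by (rule sum.reindex[OF injP, unfolded comp_def])
  hence "real (\<Sum>g\<in>K. wt g) = (\<Sum>x\<in>P. real (wt ((\<lambda>(a, b). c a b) x)))" by simp
  also have "\<dots> = (\<Sum>x\<in>P. if snd x = 0 then (if fst x = 0 then 0 else W0) else Wb)"
  proof (rule sum.cong[OF refl])
    fix x assume "x \<in> P"
    obtain a b where x: "x = (a, b)" by fastforce
    show "real (wt ((\<lambda>(a, b). c a b) x)) = (if snd x = 0 then (if fst x = 0 then 0 else W0) else Wb)"
      unfolding x using wt_a[of a] wt_b[of b a] wt_0 unfolding Wb_def W0_def by auto
  qed
  also have "\<dots> = (\<Sum>x\<in>{x\<in>P. snd x = 0}. if fst x = 0 then 0 else W0) + (\<Sum>x\<in>{x\<in>P. snd x \<noteq> 0}. Wb)"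
  proof -
    have e1: "P \<inter> {x. snd x = 0} = {x\<in>P. snd x = 0}" "P \<inter> - {x. snd x = 0} = {x\<in>P. snd x \<noteq> 0}" by auto
    show ?thesis by (simp only: sum.If_cases[OF finite] e1)
  qed
  also have "{x\<in>P. snd x = 0} = (\<lambda>a. (a, 0)) ` A" unfolding P_def A_def by auto
  also have "(\<Sum>x\<in>(\<lambda>a. (a, 0)) ` A. if fst x = 0 then 0 else W0) = (\<Sum>a\<in>A. if a = 0 then 0 else W0)"
    by (subst sum.reindex) (auto simp: inj_on_def)
  also have "\<dots> = (real (card A) - 1) * W0"
  proof -
    have "0 \<in> A" unfolding A_def using F.subspace_0[OF sK] c_00 by simp
    have "(\<Sum>a\<in>A. if a = 0 then 0 else W0) = (\<Sum>a\<in>A - {0}. W0)"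
      by (rule sum.mono_neutral_cong_right) auto
    also have "\<dots> = real (card (A - {0})) * W0" by simp
    also have "card (A - {0}) = card A - 1" using \<open>0 \<in> A\<close> by simp
    also have "real (card A - 1) = real (card A) - 1"
    proof -
      have "card A > 0" using \<open>0 \<in> A\<close> by (auto simp: card_gt_0_iff)
      thus ?thesis by (simp add: of_nat_diff)
    qed
    finally show ?thesis .
  qed
  also have "(\<Sum>x\<in>{x\<in>P. snd x \<noteq> 0}. Wb) = (real (CARD('a) ^ r) - real (card A)) * Wb"
  proof -
    have "{x\<in>P. snd x \<noteq> 0} = P - {x\<in>P. snd x = 0}" by auto
    hence "card {x\<in>P. snd x \<noteq> 0} = card P - card {x\<in>P. snd x = 0}" by (simp add: card_Diff_subset)
    moreover have "card {x\<in>P. snd x = 0} = card A"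
      using \<open>{x\<in>P. snd x = 0} = (\<lambda>a. (a, 0)) ` A\<close> by (simp add: card_image inj_on_def)
    moreover have "card {x\<in>P. snd x = 0} \<le> card P" by (rule card_mono) auto
    ultimately show ?thesis using cP by (simp add: of_nat_diff)
  qed
  finally show ?thesis unfolding A_def by simp
qed

end


section \<open>Generalized Hamming weights\<close>

context code_ctx
begin

lemma dim_from_card:
  assumes "F.subspace K" "card K = CARD('a) ^ r"
  shows "F.dim K = r"
proof -
  have "CARD('a) ^ F.dim K = CARD('a) ^ r" using card_K[OF assms(1)] assms(2) by simp
  moreover have "CARD('a) > 1" using q_ge2' by simp
  ultimately show ?thesis using power_inject_exp by blast
qed

lemma sub_W:
  assumes "j \<le> m2"
  shows "\<exists>W. module.subspace (escale emb2) W \<and> card W = CARD('a) ^ j"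
proof -
  have "vector_space.dim (escale emb2) (UNIV::'c set) = m2"
    by (rule dim_UNIV_from_card[OF vs_escale[OF T2.emb] T2.cc])
  thus ?thesis using exists_subspace_card[OF vs_escale[OF T2.emb], of j] assms by simp
qed

lemma exists_K_without:
  assumes "r \<le> m2"
  shows "\<exists>K. K \<subseteq> code_Q emb2 m2 Q \<and> F.subspace K \<and> F.dim K = r \<and> c 1 0 \<notin> K"
proof -
  obtain W where W: "module.subspace (escale emb2) W" "card W = CARD('a) ^ r"
    using sub_W[OF assms] by blast
  interpret V2: vector_space "escale emb2" by (rule vs_escale[OF T2.emb])
  define K where "K = (\<lambda>b. c 0 b) ` W"
  have KC: "K \<subseteq> code_Q emb2 m2 Q" unfolding K_def code_Q_cw by auto
  have sK: "F.subspace K"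
  proof (rule F.subspaceI)
    show "0 \<in> K" unfolding K_def using V2.subspace_0[OF W(1)] c_00 by force
  next
    fix x y assume "x \<in> K" "y \<in> K"
    then obtain b b' where "b \<in> W" "b' \<in> W" "x = c 0 b" "y = c 0 b'" unfolding K_def by auto
    moreover have "b + b' \<in> W" using V2.subspace_add[OF W(1)] calculation by simp
    ultimately show "x + y \<in> K" unfolding K_def by (auto simp: c_add)
  next
    fix t x assume "x \<in> K"
    then obtain b where "b \<in> W" "x = c 0 b" unfolding K_def by auto
    moreover have "escale emb2 t b \<in> W" using V2.subspace_scale[OF W(1)] calculation by simp
    ultimately show "fscale t x \<in> K" unfolding K_def by (auto simp: c_scale escale_def)
  qed
  have "card K = card W" unfolding K_def by (rule card_image) (auto simp: inj_on_def c_inj)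
  hence "F.dim K = r" using dim_from_card[OF sK] W(2) by simp
  moreover have "c 1 0 \<notin> K" unfolding K_def by (auto simp: c_inj)
  ultimately show ?thesis using KC sK by blast
qed

lemma exists_K_with:
  assumes "1 \<le> r" "r \<le> m2 + 1"
  shows "\<exists>K. K \<subseteq> code_Q emb2 m2 Q \<and> F.subspace K \<and> F.dim K = r \<and> c 1 0 \<in> K"
proof -
  have "r - 1 \<le> m2" using assms by simp
  then obtain W where W: "module.subspace (escale emb2) W" "card W = CARD('a) ^ (r - 1)"
    using sub_W by blast
  interpret V2: vector_space "escale emb2" by (rule vs_escale[OF T2.emb])
  define K where "K = (\<lambda>(a, b). c a b) ` ((UNIV::'a set) \<times> W)"
  have KC: "K \<subseteq> code_Q emb2 m2 Q" unfolding K_def code_Q_cw by auto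
  have sK: "F.subspace K"
  proof (rule F.subspaceI)
    have "(0::'a, 0::'c) \<in> (UNIV::'a set) \<times> W" using V2.subspace_0[OF W(1)] by simp
    thus "0 \<in> K" unfolding K_def using c_00 by (intro image_eqI[of _ _ "(0::'a, 0::'c)"]) simp_all
  next
    fix x y assume "x \<in> K" "y \<in> K"
    then obtain a a' b b' where "b \<in> W" "b' \<in> W" "x = c a b" "y = c a' b'" unfolding K_def by auto
    moreover have "b + b' \<in> W" using V2.subspace_add[OF W(1)] calculation by simp
    ultimately show "x + y \<in> K" unfolding K_def by (auto simp: c_add)
  next
    fix t x assume "x \<in> K"
    then obtain a b where "b \<in> W" "x = c a b" unfolding K_def by auto
    moreover have "escale emb2 t b \<in> W" using V2.subspace_scale[OF W(1)] calculation by simp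
    ultimately show "fscale t x \<in> K" unfolding K_def by (auto simp: c_scale escale_def)
  qed
  have "card K = card ((UNIV::'a set) \<times> W)" unfolding K_def
    by (rule card_image) (auto simp: inj_on_def c_inj)
  also have "\<dots> = CARD('a) * CARD('a) ^ (r - 1)" using W(2) by (simp add: card_cartesian_product)
  also have "\<dots> = CARD('a) ^ r" using assms(1) by (metis Suc_diff_1 less_le_trans zero_less_one power_Suc)
  finally have "F.dim K = r" using dim_from_card[OF sK] by simp
  moreover have "c 1 0 \<in> K" unfolding K_def using V2.subspace_0[OF W(1)] by auto
  ultimately show ?thesis using KC sK by blast
qed

lemma param_card:
  assumes KC: "K \<subseteq> code_Q emb2 m2 Q"
  shows "card {(a, b). c a b \<in> K} = card K"
proof -
  define P where "P = {(a, b). c a b \<in> K}"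
  have injP: "inj_on (\<lambda>(a, b). c a b) P" by (auto simp: inj_on_def c_inj)
  have KP: "K = (\<lambda>(a, b). c a b) ` P"
  proof
    show "K \<subseteq> (\<lambda>(a, b). c a b) ` P"
    proof
      fix g assume "g \<in> K"
      then obtain a b where "g = c a b" using KC unfolding code_Q_cw by auto
      thus "g \<in> (\<lambda>(a, b). c a b) ` P" using \<open>g \<in> K\<close> unfolding P_def by auto
    qed
  qed (auto simp: P_def)
  show ?thesis using KP card_image[OF injP] unfolding P_def by simp
qed

lemma full_has:
  assumes KC: "K \<subseteq> code_Q emb2 m2 Q" and sK: "F.subspace K" and cK: "card K = CARD('a) ^ (m2 + 1)"
  shows "c 1 0 \<in> K"
proof (rule ccontr)
  assume n: "c 1 0 \<notin> K"
  hence A: "{a. c a 0 \<in> K} = {0}" using A_cases[OF sK] by auto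
  define P where "P = {(a, b). c a b \<in> K}"
  have "inj_on snd P"
  proof (rule inj_onI)
    fix x y assume xyP: "x \<in> P" "y \<in> P" "snd x = snd y"
    obtain a b where x: "x = (a, b)" by fastforce
    obtain a' b' where y: "y = (a', b')" by fastforce
    have xy: "x = (a, b)" "y = (a', b)" "c a b \<in> K" "c a' b \<in> K"
      using xyP x y unfolding P_def by auto
    have "c a b - c a' b \<in> K" using F.subspace_diff[OF sK xy(3,4)] .
    hence "c (a - a') 0 \<in> K" by (simp add: c_diff)
    hence "a - a' \<in> {a. c a 0 \<in> K}" by simp
    hence "a - a' = 0" using A by blast
    thus "x = y" using xy by simp
  qed
  hence "card P \<le> card (UNIV::'c set)" using card_inj_on_le[of snd P UNIV] by simp
  moreover have "card P = CARD('a) ^ (m2 + 1)" using param_card[OF KC] cK unfolding P_def by simp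
  moreover have "CARD('c) < CARD('a) ^ (m2 + 1)" using T2.cc q_ge2'
    by (simp add: power_strict_increasing)
  ultimately show False by simp
qed

definition V1 :: "nat \<Rightarrow> real" where
  "V1 r = (real (CARD('a) ^ r) - 1) * Wb / (real (CARD('a) ^ r) - real (CARD('a) ^ (r - 1)))"
definition Vq :: "nat \<Rightarrow> real" where
  "Vq r = ((real (CARD('a) ^ r) - real CARD('a)) * Wb + (real CARD('a) - 1) * W0)
            / (real (CARD('a) ^ r) - real (CARD('a) ^ (r - 1)))"

lemma supp_val:
  assumes KC: "K \<subseteq> code_Q emb2 m2 Q" and sK: "F.subspace K" and dK: "F.dim K = r" and r: "r \<ge> 1"
  shows "real (card (supp_sub Fstar K)) = (if c 1 0 \<in> K then Vq r else V1 r)"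
proof -
  have cK: "card K = CARD('a) ^ r" using card_K[OF sK] dK by simp
  have lt: "CARD('a) ^ (r - 1) < CARD('a) ^ r" using q_ge2' r by (intro power_strict_increasing) auto
  hence "real (CARD('a) ^ (r - 1)) < real (CARD('a) ^ r)" by (simp only: of_nat_less_iff)
  hence pos: "real (CARD('a) ^ r) - real (CARD('a) ^ (r - 1)) > 0" by linarith
  have "real (\<Sum>g\<in>K. wt g) = real (card (supp_sub Fstar K)) * (real (CARD('a) ^ r) - real (CARD('a) ^ (r - 1)))"
    using count_identity[OF sK cK r] lt by (simp add: of_nat_diff)
  moreover have "real (\<Sum>g\<in>K. wt g) = (real (CARD('a) ^ r) - real (card {a. c a 0 \<in> K})) * Wb
           + (real (card {a. c a 0 \<in> K}) - 1) * W0" by (rule wt_sum_param[OF sK KC cK])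
  moreover have "card {a. c a 0 \<in> K} = (if c 1 0 \<in> K then CARD('a) else 1)"
  proof (cases "c 1 0 \<in> K")
    case True
    hence "1 \<in> {a. c a 0 \<in> K}" by simp
    hence "{a. c a 0 \<in> K} \<noteq> {0}" by (metis one_neq_zero singletonD)
    hence "{a. c a 0 \<in> K} = UNIV" using A_cases[OF sK] by blast
    thus ?thesis using True by simp
  next
    case False
    hence "1 \<notin> {a. c a 0 \<in> K}" by simp
    hence "{a. c a 0 \<in> K} \<noteq> UNIV" by blast
    hence "{a. c a 0 \<in> K} = {0}" using A_cases[OF sK] by blast
    thus ?thesis using False by simp
  qed
  ultimately have eq: "real (card (supp_sub Fstar K)) * (real (CARD('a) ^ r) - real (CARD('a) ^ (r - 1)))
     = (real (CARD('a) ^ r) - real (if c 1 0 \<in> K then CARD('a) else 1)) * Wb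
           + (real (if c 1 0 \<in> K then CARD('a) else 1) - 1) * W0" by simp
  hence "real (card (supp_sub Fstar K)) = ((real (CARD('a) ^ r) - real (if c 1 0 \<in> K then CARD('a) else 1)) * Wb
           + (real (if c 1 0 \<in> K then CARD('a) else 1) - 1) * W0) / (real (CARD('a) ^ r) - real (CARD('a) ^ (r - 1)))"
    using pos by (simp add: eq_divide_eq)
  thus ?thesis unfolding V1_def Vq_def by (cases "c 1 0 \<in> K") simp_all
qed

lemma ghw_val:
  assumes r1: "1 \<le> r" and r2: "r \<le> m2 + 1"
  shows "real (ghw Fstar (code_Q emb2 m2 Q) r) = (if r \<le> m2 then min (V1 r) (Vq r) else Vq r)"
proof -
  define S where "S = {card (supp_sub Fstar K) | K. K \<subseteq> code_Q emb2 m2 Q \<and> F.subspace K \<and> F.dim K = r}"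
  have g: "ghw Fstar (code_Q emb2 m2 Q) r = Min S" unfolding ghw_def S_def by simp
  have "S \<subseteq> {..card (Fstar :: ('b \<times> 'c) set)}"
    unfolding S_def supp_sub_def by (auto intro!: card_mono)
  hence finS: "finite S" by (rule finite_subset) simp
  obtain K2 where K2: "K2 \<subseteq> code_Q emb2 m2 Q" "F.subspace K2" "F.dim K2 = r" "c 1 0 \<in> K2"
    using exists_K_with[OF r1 r2] by blast
  have vq: "real (card (supp_sub Fstar K2)) = Vq r" using supp_val[OF K2(1-3) r1] K2(4) by simp
  have inS2: "card (supp_sub Fstar K2) \<in> S" unfolding S_def using K2 by blast
  hence neS: "S \<noteq> {}" by auto
  have "Min S \<in> S" using Min_in[OF finS neS] .
  then obtain K where K: "K \<subseteq> code_Q emb2 m2 Q" "F.subspace K" "F.dim K = r"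
      "Min S = card (supp_sub Fstar K)" unfolding S_def by blast
  have mK: "real (Min S) = (if c 1 0 \<in> K then Vq r else V1 r)" using supp_val[OF K(1-3) r1] K(4) by simp
  have le2: "real (Min S) \<le> Vq r" using Min_le[OF finS inS2] vq by simp
  show ?thesis
  proof (cases "r \<le> m2")
    case True
    obtain K1 where K1: "K1 \<subseteq> code_Q emb2 m2 Q" "F.subspace K1" "F.dim K1 = r" "c 1 0 \<notin> K1"
      using exists_K_without[OF True] by blast
    have v1: "real (card (supp_sub Fstar K1)) = V1 r" using supp_val[OF K1(1-3) r1] K1(4) by simp
    have inS1: "card (supp_sub Fstar K1) \<in> S" unfolding S_def using K1 by blast
    have le1: "real (Min S) \<le> V1 r" using Min_le[OF finS inS1] v1 by simp
    show ?thesis using g mK le1 le2 True by (auto simp: min_def split: if_splits)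
  next
    case False
    hence "r = m2 + 1" using r2 by simp
    hence "c 1 0 \<in> K" using full_has[OF K(1,2)] card_K[OF K(2)] K(3) by simp
    thus ?thesis using g mK False by simp
  qed
qed

end


lemma parity_pm:
  assumes "odd (p::nat)"
  shows "even ((p ^ m - 1) div 2 + (p - 1) div 2 * m)"
proof (induction m)
  case 0 thus ?case by simp
next
  case (Suc m)
  define a where "a = (p - 1) div 2"
  have pa: "p = 2 * a + 1" using assms unfolding a_def by presburger
  define f where "f = (p ^ m - 1) div 2"
  have pm: "odd (p ^ m)" using assms by simp
  hence fm: "p ^ m = 2 * f + 1" unfolding f_def by presburger
  have "p ^ Suc m = p * (2 * f + 1)" using fm by simp
  also have "\<dots> = 2 * (p * f + a) + 1" using pa by (simp add: algebra_simps)
  finally have "(p ^ Suc m - 1) div 2 = p * f + a" by simp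
  hence "(p ^ Suc m - 1) div 2 + (p - 1) div 2 * Suc m = (p - 1) * f + (f + a * m) + 2 * a"
    unfolding a_def[symmetric] using pa by (simp add: algebra_simps)
  moreover have "even ((p - 1) * f)" using pa by simp
  moreover have "even (f + a * m)" using Suc.IH unfolding f_def a_def by simp
  ultimately show ?case by simp
qed

lemma eta_power:
  assumes "odd CARD('a::{field,finite})"
  shows "eta ((x::'a) ^ n) = eta x ^ n"
proof (induction n)
  case 0
  have "eta (1::'a) = 1" unfolding eta_def by (auto intro: exI[of _ 1])
  thus ?case by simp
next
  case (Suc n)
  thus ?case using eta_mult[OF assms] by simp
qed

lemma alg_V1:
  fixes q x y z :: real
  assumes "q > 1" "x > 0"
  shows "(x - 1) * (y * (z - z / q)) / (x - x / q) = y * z * (x - 1) / x"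
  using assms by (simp add: field_simps)

lemma alg_Vq:
  fixes q x y z N :: real
  assumes "q > 1" "x > 0"
  shows "((x - q) * (y * (z - z / q)) + (q - 1) * ((y - N) * z)) / (x - x / q)
         = y * z * (x - 1) / x - (N - y / q) * z * q / x"
  using assms by (simp add: field_simps)

lemma alg_N0:
  fixes w q Y E :: real
  assumes "w > 0" "q > 0"
  shows "Y / (w * w) * (w * w / q + E * w / q * (q - 1)) = Y / q + E * (q - 1) * Y / (w * q)"
  using assms by (simp add: field_simps)

context code_ctx
begin

lemma odd_p: "odd p"
proof -
  have "m \<noteq> 0"
  proof
    assume "m = 0"
    hence "CARD('a) = 1" using T2.ca by simp
    thus False using q_ge2' by simp
  qed
  thus ?thesis using Q1.oddq T2.ca by simp
qed

lemma main:
  assumes r1: "1 \<le> r" and r2: "r \<le> m2 + 1"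
  shows
    "let q = real (p ^ m); M = m1 + m2; rQ = qf_rank emb1 m1 Q; e = sign_eps p m emb1 m1 Q;
         d = real (ghw Fstar (code_Q emb2 m2 Q) r)
     in (even rQ \<and> e = 1 \<longrightarrow> d = q ^ (M - r) * (q ^ r - 1 - (q - 1) / q ^ (rQ div 2))) \<and>
        (even rQ \<and> e = -1 \<and> r < m2 + 1 \<longrightarrow> d = q ^ (M - r) * (q ^ r - 1)) \<and>
        (even rQ \<and> e = -1 \<and> r = m2 + 1 \<longrightarrow>
            d = q ^ (M - r) * (q ^ r - 1 + (q - 1) / q ^ (rQ div 2))) \<and>
        (odd rQ \<longrightarrow> d = q ^ (M - r) * (q ^ r - 1))"
proof -
  define q where "q = real CARD('a)"
  have qp: "real (p ^ m) = q" unfolding q_def using T2.ca by simp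
  have q1: "q > 1" unfolding q_def using q_ge2' by simp
  define rQ where "rQ = qf_rank emb1 m1 Q"
  define h where "h = rQ div 2"
  define lam0 where "lam0 = (SOME lam. \<exists>e. qf_diag emb1 m1 Q e lam rQ)"
  have "\<exists>e lam. qf_diag emb1 m1 Q e lam rQ" unfolding rQ_def by (rule Q1.diag_exists[OF cb])
  hence "\<exists>lam e. qf_diag emb1 m1 Q e lam rQ" by blast
  hence "\<exists>e. qf_diag emb1 m1 Q e lam0 rQ" unfolding lam0_def by (rule someI_ex)
  then obtain e0 where d0: "qf_diag emb1 m1 Q e0 lam0 rQ" by blast
  have rQm1: "rQ \<le> m1" unfolding rQ_def qf_rank_def by simp
  have lnz: "\<forall>i<rQ. lam0 i \<noteq> 0" using d0 unfolding qf_diag_def by auto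
  have N0eq: "N0 = CARD('a) ^ (m1 - rQ) * Nd lam0 rQ 0" by (rule Q1.N0_formula[OF d0 rQm1])
  define E where "E = eta ((-1) ^ h * prod lam0 {..<rQ})"
  have eps: "qf_eps emb1 m1 Q = eta (prod lam0 {..<rQ})"
    unfolding qf_eps_def Let_def rQ_def[symmetric] lam0_def by simp
  have qpow: "q ^ (m1 - rQ) = q ^ m1 / q ^ rQ" using rQm1 q1 by (simp add: power_diff)
  have N0r: "real N0 = q ^ m1 / q + (if even rQ then real_of_int E * (q - 1) * q ^ m1 / (q ^ h * q) else 0)"
  proof (cases "even rQ")
    case True
    have rh: "rQ = 2 * h" unfolding h_def using True by simp
    have "real N0 = q ^ (m1 - rQ) * real (Nd lam0 rQ 0)" unfolding N0eq q_def by simp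
    also have "real (Nd lam0 rQ 0) = q ^ rQ / q + real_of_int E * q ^ h / q * (q - 1)"
      using Nd_formula[OF Q1.oddq lnz, of 0] True unfolding E_def h_def q_def by simp
    finally have "real N0 = q ^ m1 / q ^ rQ * (q ^ rQ / q + real_of_int E * q ^ h / q * (q - 1))"
      unfolding qpow .
    moreover have "q ^ rQ = q ^ h * q ^ h" unfolding rh by (simp add: power2_eq_square power_mult mult.commute)
    moreover have "q ^ m1 / (q ^ h * q ^ h) * (q ^ h * q ^ h / q + real_of_int E * q ^ h / q * (q - 1))
        = q ^ m1 / q + real_of_int E * (q - 1) * q ^ m1 / (q ^ h * q)"
      by (rule alg_N0) (use q1 in auto)
    ultimately show ?thesis using True by simp
  next
    case False
    have "real N0 = q ^ (m1 - rQ) * real (Nd lam0 rQ 0)" unfolding N0eq q_def by simp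
    also have "real (Nd lam0 rQ 0) = q ^ rQ / q"
      using Nd_formula[OF Q1.oddq lnz, of 0] False unfolding q_def by (simp add: eta_def)
    finally show ?thesis using False q1 unfolding qpow by (simp add: field_simps)
  qed
  have m1pos: "m1 \<ge> 1"
  proof (rule ccontr)
    assume "\<not> m1 \<ge> 1"
    hence "CARD('b) = 1" using cb by simp
    moreover have "card {0, 1::'b} \<le> CARD('b)" by (rule card_mono) auto
    ultimately show False by simp
  qed
  define x where "x = q ^ r"
  define y where "y = q ^ m1"
  define z where "z = q ^ m2"
  define w where "w = q ^ h"
  have xpos: "x > 0" "y > 0" "z > 0" "w > 0" unfolding x_def y_def z_def w_def using q1 by auto
  have rM: "r \<le> m1 + m2" using r2 m1pos by simp
  have qM: "q ^ (m1 + m2 - r) = y * z / x" unfolding x_def y_def z_def using rM q1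
    by (simp add: power_diff power_add)
  have pr1: "real (CARD('a) ^ (r - 1)) = x / q"
  proof -
    have "real (CARD('a) ^ (r - 1)) = q ^ (r - 1)" unfolding q_def by simp
    also have "\<dots> = x / q" unfolding x_def using r1 q1 by (simp add: power_diff)
    finally show ?thesis .
  qed
  have pm1: "real (CARD('a) ^ (m2 - 1)) = z / q"
  proof -
    have "real (CARD('a) ^ (m2 - 1)) = q ^ (m2 - 1)" unfolding q_def by simp
    also have "\<dots> = z / q" unfolding z_def using T2.m2 q1 by (simp add: power_diff)
    finally show ?thesis .
  qed
  have le1: "CARD('a) ^ (m2 - 1) \<le> CARD('a) ^ m2" using q_ge2' by (intro power_increasing) auto
  have Wbr: "Wb = y * (z - z / q)" unfolding Wb_def using le1 pm1
    by (simp add: of_nat_diff y_def z_def q_def)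
  have W0r: "W0 = (y - real N0) * z" unfolding W0_def using N0_lt
    by (simp add: of_nat_diff y_def z_def q_def)
  have V1r: "V1 r = y * z * (x - 1) / x"
    unfolding V1_def Wbr pr1 using alg_V1[OF q1 xpos(1), of y z] unfolding x_def q_def by simp
  define del where "del = (if even rQ then real_of_int E * (q - 1) * y * z / (w * x) else 0)"
  have Vqr: "Vq r = y * z * (x - 1) / x - del"
  proof -
    have "Vq r = y * z * (x - 1) / x - (real N0 - y / q) * z * q / x"
      unfolding Vq_def Wbr W0r pr1 using alg_Vq[OF q1 xpos(1), of y z "real N0"] unfolding x_def q_def
      by simp
    also have "(real N0 - y / q) * z * q / x = del"
      unfolding del_def N0r using q1 xpos by (auto simp: field_simps y_def w_def)
    finally show ?thesis .
  qed
  have ghw: "real (ghw Fstar (code_Q emb2 m2 Q) r) = (if r \<le> m2 then min (V1 r) (Vq r) else Vq r)"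
    by (rule ghw_val[OF r1 r2])
  have E_sign: "E = sign_eps p m emb1 m1 Q" if ev: "even rQ"
  proof -
    define a where "a = (p - 1) div 2"
    have pa: "p - 1 = 2 * a" using odd_p unfolding a_def by presburger
    have rh: "rQ = 2 * h" unfolding h_def using ev by simp
    have "(p - 1) * m * rQ div 4 = a * m * h" unfolding pa rh by simp
    hence s1: "sign_eps p m emb1 m1 Q = eta (prod lam0 {..<rQ}) * (-1) ^ (a * m * h)"
      unfolding sign_eps_def Let_def rQ_def[symmetric] eps using ev by simp
    have "E = eta ((-1::'a) ^ h) * eta (prod lam0 {..<rQ})" unfolding E_def by (rule eta_mult[OF Q1.oddq])
    also have "eta ((-1::'a) ^ h) = ((-1) ^ ((CARD('a) - 1) div 2)) ^ h"
      using eta_power[OF Q1.oddq] eta_minus1[OF Q1.oddq] by (simp add: kq_def[OF Q1.oddq])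
    also have "\<dots> = (-1) ^ (a * m * h)"
    proof -
      have "even ((p ^ m - 1) div 2 + (p - 1) div 2 * m)" by (rule parity_pm[OF odd_p])
      hence "even (((CARD('a) - 1) div 2) * h + a * m * h)"
        unfolding a_def T2.ca by (metis add_mult_distrib even_mult_iff)
      hence par: "even ((CARD('a) - 1) div 2 * h) = even (a * m * h)" by simp
      have "((-1::int) ^ ((CARD('a) - 1) div 2)) ^ h = (-1) ^ ((CARD('a) - 1) div 2 * h)"
        by (rule power_mult[symmetric])
      also have "\<dots> = (-1) ^ (a * m * h)"
        by (simp only: minus_one_power_iff par)
      finally show ?thesis .
    qed
    finally show ?thesis using s1 by (simp add: mult.commute)
  qed
  have E_pm: "E = 1 \<or> E = -1"
  proof -
    have "(-1::'a) ^ h * prod lam0 {..<rQ} \<noteq> 0" using lnz by simp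
    thus ?thesis unfolding E_def using eta_nz[OF Q1.oddq] by blast
  qed
  have tgt1: "y * z / x * (x - 1 - (q - 1) / w) = y * z * (x - 1) / x - (q - 1) * y * z / (w * x)"
    using xpos by (simp add: field_simps)
  have tgt2: "y * z / x * (x - 1 + (q - 1) / w) = y * z * (x - 1) / x + (q - 1) * y * z / (w * x)"
    using xpos by (simp add: field_simps)
  have tgt3: "y * z / x * (x - 1) = y * z * (x - 1) / x" by simp
  have dpos: "(q - 1) * y * z / (w * x) \<ge> 0" using q1 xpos by simp
  show ?thesis
    unfolding Let_def qp rQ_def[symmetric] h_def[symmetric] qM x_def[symmetric] w_def[symmetric]
  proof (intro conjI impI)
    assume a: "even rQ \<and> sign_eps p m emb1 m1 Q = 1"
    hence "E = 1" using E_sign by simp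
    hence dl: "del = (q - 1) * y * z / (w * x)" unfolding del_def using a by simp
    have "real (ghw Fstar (code_Q emb2 m2 Q) r) = V1 r - del"
      unfolding ghw Vqr V1r using dl dpos by (auto simp: min_def)
    thus "real (ghw Fstar (code_Q emb2 m2 Q) r) = y * z / x * (x - 1 - (q - 1) / w)"
      unfolding tgt1 V1r dl .
  next
    assume a: "even rQ \<and> sign_eps p m emb1 m1 Q = -1 \<and> r < m2 + 1"
    hence "E = -1" using E_sign by simp
    hence dl: "del = - ((q - 1) * y * z / (w * x))" unfolding del_def using a xpos by (simp add: field_simps)
    have "real (ghw Fstar (code_Q emb2 m2 Q) r) = V1 r"
      unfolding ghw Vqr V1r using dl dpos a by (auto simp: min_def)
    thus "real (ghw Fstar (code_Q emb2 m2 Q) r) = y * z / x * (x - 1)"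
      unfolding tgt3 V1r .
  next
    assume a: "even rQ \<and> sign_eps p m emb1 m1 Q = -1 \<and> r = m2 + 1"
    hence "E = -1" using E_sign by simp
    hence dl: "del = - ((q - 1) * y * z / (w * x))" unfolding del_def using a xpos by (simp add: field_simps)
    have "real (ghw Fstar (code_Q emb2 m2 Q) r) = V1 r - del"
      unfolding ghw Vqr V1r using a by simp
    thus "real (ghw Fstar (code_Q emb2 m2 Q) r) = y * z / x * (x - 1 + (q - 1) / w)"
      unfolding tgt2 V1r dl by simp
  next
    assume a: "odd rQ"
    hence "del = 0" unfolding del_def by simp
    hence "real (ghw Fstar (code_Q emb2 m2 Q) r) = V1 r"
      unfolding ghw Vqr V1r by simp
    thus "real (ghw Fstar (code_Q emb2 m2 Q) r) = y * z / x * (x - 1)"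
      unfolding tgt3 V1r .
  qed
qed

end

theorem theorem2:
  fixes p m m1 m2 :: nat
    and emb1 :: "'a::{field,finite} \<Rightarrow> 'b::{field,finite}"
    and emb2 :: "'a \<Rightarrow> 'c::{field,finite}"
    and Q :: "'b \<Rightarrow> 'a"
    and r :: nat
  assumes "prime p" and "odd p" and "m \<ge> 1"
    and "CARD('a) = p ^ m"
    and "m1 \<ge> 1" and "m2 \<ge> 1"
    and "CARD('b) = (p ^ m) ^ m1" and "CARD('c) = (p ^ m) ^ m2"
    and "field_emb emb1" and "field_emb emb2"
    and "is_quadratic_form emb1 Q" and "Q \<noteq> (\<lambda>_. 0)"
    and "1 \<le> r" and "r \<le> m2 + 1"
  shows
    "let q = real (p ^ m); M = m1 + m2; rQ = qf_rank emb1 m1 Q; e = sign_eps p m emb1 m1 Q;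
         d = real (ghw Fstar (code_Q emb2 m2 Q) r)
     in (even rQ \<and> e = 1 \<longrightarrow> d = q ^ (M - r) * (q ^ r - 1 - (q - 1) / q ^ (rQ div 2))) \<and>
        (even rQ \<and> e = -1 \<and> r < m2 + 1 \<longrightarrow> d = q ^ (M - r) * (q ^ r - 1)) \<and>
        (even rQ \<and> e = -1 \<and> r = m2 + 1 \<longrightarrow>
            d = q ^ (M - r) * (q ^ r - 1 + (q - 1) / q ^ (rQ div 2))) \<and>
        (odd rQ \<longrightarrow> d = q ^ (M - r) * (q ^ r - 1))"
proof -
  have oddq: "odd CARD('a)" using assms(2,4) by simp
  have cb: "CARD('b) = CARD('a) ^ m1" using assms(4,7) by simp
  have cc: "CARD('c) = CARD('a) ^ m2" using assms(4,8) by simp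
  interpret code_ctx emb1 Q emb2 m2 p m m1
  proof (unfold_locales)
  qed (use assms oddq cb cc in auto)
  show ?thesis by (rule main[OF assms(13,14)])
qed

end
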